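(* The assignments $L\mapsto\operatorname{Spec}L$ and $X\mapsto L_{\mathrm{open}}(X)$ form an adjoint pair of contravariant functors between the category of ideal lattices and the category of spectral spaces: for every ideal lattice $L$ and spectral space $X$ there are mutually inverse natural bijections between morphisms of ideal lattices $L\to L_{\mathrm{open}}(X)$ and continuous maps $X\to\operatorname{Spec}L$, given by $\phi\mapsto\big(x\mapsto\bigvee\{c \text{ compact}\mid x\notin\phi(c)\}\big)$ and $f\mapsto\big(a\mapsto f^{-1}(D(a))\big)$. Moreover, $L_{\mathrm{open}}$ is fully faithful, and an ideal lattice $L$ is isomorphic to one of the form $L_{\mathrm{open}}(X)$ if and only if every element of $L$ is semi-prime.
   Context: An ideal lattice is a poset $(L,\leq)$ with an associative multiplication such that: (L1) $L$ is a complete lattice; (L2) every element is a supremum of compact elements ($a$ is compact if $a\leq\sup A$ implies $a\leq\sup A'$ for some finite $A'\subseteq A$); (L3) multiplication distributes over binary joins on both sides; (L4) $1=\sup L$ is compact and is a two-sided identity; (L5) products of compact elements are compact. A morphism of ideal lattices $\phi\colon L\to L'$ is a map preserving arbitrary suprema, with $\phi(1)=1$ and $\phi(ab)=\phi(a)\phi(b)$. Prime: $p\neq1$ with $ab\leq p\Rightarrow a\leq p$ or $b\leq p$; semi-prime: $bb\leq a\Rightarrow b\leq a$. $\operatorname{Spec}L$: set of primes with closed sets $V(a)=\{p\mid a\leq p\}$, opens $D(a)=\{p\mid a\not\leq p\}$; a morphism $\phi\colon L\to L'$ induces the continuous map $\operatorname{Spec}L'\to\operatorname{Spec}L$, $p\mapsto\sup\{a\mid\phi(a)\leq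 p\}$. $L_{\mathrm{open}}(X)$ is the lattice of open subsets of $X$ with multiplication $U\cap V$; a continuous map $f$ induces $U\mapsto f^{-1}(U)$. A spectral space is a $T_0$, quasi-compact space whose quasi-compact open subsets are closed under finite intersections and form an open basis, and in which every non-empty irreducible closed subset has a generic point. *)

theory Defs
  imports "HOL-Analysis.Analysis"
begin

type_synonym 'a ilat = "'a set \<times> ('a \<Rightarrow> 'a \<Rightarrow> bool) \<times> ('a \<Rightarrow> 'a \<Rightarrow> 'a)"

definition car :: "'a ilat \<Rightarrow> 'a set" where "car L = fst L"
definition leq :: "'a ilat \<Rightarrow> 'a \<Rightarrow> 'a \<Rightarrow> bool" where "leq L = fst (snd L)"
definition mult :: "'a ilat \<Rightarrow> 'a \<Rightarrow> 'a \<Rightarrow> 'a" where "mult L = snd (snd L)"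

definition is_lsup :: "'a ilat \<Rightarrow> 'a set \<Rightarrow> 'a \<Rightarrow> bool" where
  "is_lsup L B s \<longleftrightarrow> s \<in> car L \<and> (\<forall>b\<in>B. leq L b s) \<and>
     (\<forall>t\<in>car L. (\<forall>b\<in>B. leq L b t) \<longrightarrow> leq L s t)"

definition lsup :: "'a ilat \<Rightarrow> 'a set \<Rightarrow> 'a" where
  "lsup L B = (THE s. is_lsup L B s)"

definition ltop :: "'a ilat \<Rightarrow> 'a" where "ltop L = lsup L (car L)"

definition compact_el :: "'a ilat \<Rightarrow> 'a \<Rightarrow> bool" where
  "compact_el L a \<longleftrightarrow> a \<in> car L \<and>
     (\<forall>B \<subseteq> car L. leq L a (lsup L B) \<longrightarrow> (\<exists>B' \<subseteq> B. finite B' \<and> leq L a (lsup L B')))"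

definition ideal_lattice :: "'a ilat \<Rightarrow> bool" where
  "ideal_lattice L \<longleftrightarrow>
     \<comment> \<open>partial order\<close>
     (\<forall>a\<in>car L. leq L a a) \<and>
     (\<forall>a\<in>car L. \<forall>b\<in>car L. leq L a b \<and> leq L b a \<longrightarrow> a = b) \<and>
     (\<forall>a\<in>car L. \<forall>b\<in>car L. \<forall>c\<in>car L. leq L a b \<and> leq L b c \<longrightarrow> leq L a c) \<and>
     \<comment> \<open>associative multiplication on the carrier\<close>
     (\<forall>a\<in>car L. \<forall>b\<in>car L. mult L a b \<in> car L) \<and>
     (\<forall>a\<in>car L. \<forall>b\<in>car L. \<forall>c\<in>car L. mult L (mult L a b) c = mult L a (mult L b c)) \<and>
     \<comment> \<open>(L1) complete lattice\<close>
     (\<forall>B \<subseteq> car L. \<exists>s. is_lsup L B s) \<and>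
     \<comment> \<open>(L2) every element is a supremum of compact elements\<close>
     (\<forall>a\<in>car L. \<exists>C. (\<forall>c\<in>C. compact_el L c) \<and> a = lsup L C) \<and>
     \<comment> \<open>(L3) distributivity over binary joins\<close>
     (\<forall>a\<in>car L. \<forall>b\<in>car L. \<forall>c\<in>car L.
        mult L a (lsup L {b, c}) = lsup L {mult L a b, mult L a c} \<and>
        mult L (lsup L {b, c}) a = lsup L {mult L b a, mult L c a}) \<and>
     \<comment> \<open>(L4) the top element is compact and a two-sided identity\<close>
     compact_el L (ltop L) \<and>
     (\<forall>a\<in>car L. mult L (ltop L) a = a \<and> mult L a (ltop L) = a) \<and>
     \<comment> \<open>(L5) products of compact elements are compact\<close>
     (\<forall>a b. compact_el L a \<and> compact_el L b \<longrightarrow> compact_el L (mult L a b))"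

definition ilat_hom :: "'a ilat \<Rightarrow> 'b ilat \<Rightarrow> ('a \<Rightarrow> 'b) \<Rightarrow> bool" where
  "ilat_hom L L' \<phi> \<longleftrightarrow>
     (\<forall>a\<in>car L. \<phi> a \<in> car L') \<and>
     (\<forall>B \<subseteq> car L. \<phi> (lsup L B) = lsup L' (\<phi> ` B)) \<and>
     \<phi> (ltop L) = ltop L' \<and>
     (\<forall>a\<in>car L. \<forall>b\<in>car L. \<phi> (mult L a b) = mult L' (\<phi> a) (\<phi> b))"

definition ilat_iso :: "'a ilat \<Rightarrow> 'b ilat \<Rightarrow> ('a \<Rightarrow> 'b) \<Rightarrow> bool" where
  "ilat_iso L L' \<phi> \<longleftrightarrow> ilat_hom L L' \<phi> \<and> bij_betw \<phi> (car L) (car L') \<and>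
     ilat_hom L' L (inv_into (car L) \<phi>)"

definition prime_el :: "'a ilat \<Rightarrow> 'a \<Rightarrow> bool" where
  "prime_el L p \<longleftrightarrow> p \<in> car L \<and> p \<noteq> ltop L \<and>
     (\<forall>a\<in>car L. \<forall>b\<in>car L. leq L (mult L a b) p \<longrightarrow> leq L a p \<or> leq L b p)"

definition semiprime_el :: "'a ilat \<Rightarrow> 'a \<Rightarrow> bool" where
  "semiprime_el L a \<longleftrightarrow> a \<in> car L \<and>
     (\<forall>b\<in>car L. leq L (mult L b b) a \<longrightarrow> leq L b a)"

definition Dset :: "'a ilat \<Rightarrow> 'a \<Rightarrow> 'a set" where
  "Dset L a = {p. prime_el L p \<and> \<not> leq L a p}"

definition Spec :: "'a ilat \<Rightarrow> 'a topology" where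
  "Spec L = topology (\<lambda>U. \<exists>a\<in>car L. U = Dset L a)"

definition spec_map :: "'a ilat \<Rightarrow> 'b ilat \<Rightarrow> ('a \<Rightarrow> 'b) \<Rightarrow> 'b \<Rightarrow> 'a" where
  "spec_map L L' \<phi> p = lsup L {a \<in> car L. leq L' (\<phi> a) p}"

definition Lopen :: "'b topology \<Rightarrow> 'b set ilat" where
  "Lopen X = ({U. openin X U}, (\<subseteq>), (\<inter>))"

definition Lopen_map :: "'a topology \<Rightarrow> ('a \<Rightarrow> 'b) \<Rightarrow> 'b set \<Rightarrow> 'a set" where
  "Lopen_map X f U = {x \<in> topspace X. f x \<in> U}"

definition irreducible_closed :: "'a topology \<Rightarrow> 'a set \<Rightarrow> bool" where
  "irreducible_closed X Z \<longleftrightarrow> closedin X Z \<and> Z \<noteq> {} \<and>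
     (\<forall>C1 C2. closedin X C1 \<and> closedin X C2 \<and> Z \<subseteq> C1 \<union> C2 \<longrightarrow> Z \<subseteq> C1 \<or> Z \<subseteq> C2)"

definition spectral_space :: "'a topology \<Rightarrow> bool" where
  "spectral_space X \<longleftrightarrow> t0_space X \<and> compactin X (topspace X) \<and>
     (\<forall>U V. openin X U \<and> compactin X U \<and> openin X V \<and> compactin X V
         \<longrightarrow> compactin X (U \<inter> V)) \<and>
     (\<forall>W. openin X W \<longrightarrow> (\<exists>\<B>. (\<forall>U\<in>\<B>. openin X U \<and> compactin X U) \<and> W = \<Union>\<B>)) \<and>
     (\<forall>Z. irreducible_closed X Z \<longrightarrow> (\<exists>x\<in>Z. X closure_of {x} = Z))"

definition adj_Phi :: "'a ilat \<Rightarrow> ('a \<Rightarrow> 'b set) \<Rightarrow> 'b \<Rightarrow> 'a" where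
  "adj_Phi L \<phi> x = lsup L {c. compact_el L c \<and> x \<notin> \<phi> c}"

definition adj_Psi :: "'a ilat \<Rightarrow> 'b topology \<Rightarrow> ('b \<Rightarrow> 'a) \<Rightarrow> 'a \<Rightarrow> 'b set" where
  "adj_Psi L X f a = {x \<in> topspace X. f x \<in> Dset L a}"

end

theory Submission
  imports Defs
begin

primrec lpw :: "'a ilat \<Rightarrow> 'a \<Rightarrow> nat \<Rightarrow> 'a" where
  "lpw L c 0 = c"
| "lpw L c (Suc n) = mult L (lpw L c n) c"

lemma lsup_eqI:
  assumes "is_lsup L B s"
    and anti: "\<And>a b. a \<in> car L \<Longrightarrow> b \<in> car L \<Longrightarrow> leq L a b \<Longrightarrow> leq L b a \<Longrightarrow> a = b"
  shows "lsup L B = s"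
  unfolding lsup_def
proof (rule the_equality)
  show "is_lsup L B s" by fact
  fix t assume "is_lsup L B t"
  with assms show "t = s" unfolding is_lsup_def by metis
qed

locale IL =
  fixes L :: "'a ilat"
  assumes IL: "ideal_lattice L"
begin

lemma refl: "a \<in> car L \<Longrightarrow> leq L a a"
  using IL[unfolded ideal_lattice_def, THEN conjunct1] by blast
lemma antisym: "a \<in> car L \<Longrightarrow> b \<in> car L \<Longrightarrow> leq L a b \<Longrightarrow> leq L b a \<Longrightarrow> a = b"
  using IL[unfolded ideal_lattice_def, THEN conjunct2, THEN conjunct1] by blast
lemma trans: "leq L a b \<Longrightarrow> leq L b c \<Longrightarrow> a \<in> car L \<Longrightarrow> b \<in> car L \<Longrightarrow> c \<in> car L \<Longrightarrow> leq L a c"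
  using IL[unfolded ideal_lattice_def, THEN conjunct2, THEN conjunct2, THEN conjunct1] by blast
lemma mult_in: "a \<in> car L \<Longrightarrow> b \<in> car L \<Longrightarrow> mult L a b \<in> car L"
  using IL[unfolded ideal_lattice_def, THEN conjunct2, THEN conjunct2, THEN conjunct2, THEN conjunct1] by blast
lemma assoc: "a \<in> car L \<Longrightarrow> b \<in> car L \<Longrightarrow> c \<in> car L \<Longrightarrow> mult L (mult L a b) c = mult L a (mult L b c)"
  using IL[unfolded ideal_lattice_def, THEN conjunct2, THEN conjunct2, THEN conjunct2, THEN conjunct2, THEN conjunct1] by blast
lemma lsup_ex: "B \<subseteq> car L \<Longrightarrow> \<exists>s. is_lsup L B s"
  using IL[unfolded ideal_lattice_def, THEN conjunct2, THEN conjunct2, THEN conjunct2, THEN conjunct2, THEN conjunct2, THEN conjunct1] by blast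
lemma L2: "a \<in> car L \<Longrightarrow> \<exists>C. (\<forall>c\<in>C. compact_el L c) \<and> a = lsup L C"
  using IL[unfolded ideal_lattice_def, THEN conjunct2, THEN conjunct2, THEN conjunct2, THEN conjunct2, THEN conjunct2, THEN conjunct2, THEN conjunct1] by blast
lemma distr: "a \<in> car L \<Longrightarrow> b \<in> car L \<Longrightarrow> c \<in> car L \<Longrightarrow>
        mult L a (lsup L {b, c}) = lsup L {mult L a b, mult L a c} \<and>
        mult L (lsup L {b, c}) a = lsup L {mult L b a, mult L c a}"
  using IL[unfolded ideal_lattice_def, THEN conjunct2, THEN conjunct2, THEN conjunct2, THEN conjunct2, THEN conjunct2, THEN conjunct2, THEN conjunct2, THEN conjunct1] by blast
lemma top_compact: "compact_el L (ltop L)"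
  using IL[unfolded ideal_lattice_def, THEN conjunct2, THEN conjunct2, THEN conjunct2, THEN conjunct2, THEN conjunct2, THEN conjunct2, THEN conjunct2, THEN conjunct2, THEN conjunct1] by blast
lemma top_unit: "a \<in> car L \<Longrightarrow> mult L (ltop L) a = a \<and> mult L a (ltop L) = a"
  using IL[unfolded ideal_lattice_def, THEN conjunct2, THEN conjunct2, THEN conjunct2, THEN conjunct2, THEN conjunct2, THEN conjunct2, THEN conjunct2, THEN conjunct2, THEN conjunct2, THEN conjunct1] by blast
lemma L5: "compact_el L a \<Longrightarrow> compact_el L b \<Longrightarrow> compact_el L (mult L a b)"
  using IL[unfolded ideal_lattice_def, THEN conjunct2, THEN conjunct2, THEN conjunct2, THEN conjunct2, THEN conjunct2, THEN conjunct2, THEN conjunct2, THEN conjunct2, THEN conjunct2, THEN conjunct2] by blast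

lemma lsup_is: assumes "B \<subseteq> car L" shows "is_lsup L B (lsup L B)"
proof -
  obtain s where s: "is_lsup L B s" using lsup_ex assms by blast
  have "lsup L B = s" by (rule lsup_eqI[OF s antisym])
  then show ?thesis using s by simp
qed

lemma lsup_in: "B \<subseteq> car L \<Longrightarrow> lsup L B \<in> car L"
  using lsup_is unfolding is_lsup_def by blast
lemma lsup_upper: "B \<subseteq> car L \<Longrightarrow> b \<in> B \<Longrightarrow> leq L b (lsup L B)"
  using lsup_is unfolding is_lsup_def by blast
lemma lsup_least: "B \<subseteq> car L \<Longrightarrow> t \<in> car L \<Longrightarrow> (\<And>b. b \<in> B \<Longrightarrow> leq L b t) \<Longrightarrow> leq L (lsup L B) t"
  using lsup_is unfolding is_lsup_def by blast
lemma lsup_unique: "is_lsup L B s \<Longrightarrow> lsup L B = s"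
  by (rule lsup_eqI[OF _ antisym])

lemma top_in: "ltop L \<in> car L"
  unfolding ltop_def by (rule lsup_in) simp
lemma top_greatest: "a \<in> car L \<Longrightarrow> leq L a (ltop L)"
  unfolding ltop_def by (rule lsup_upper) auto

lemma lsup_mono: "B \<subseteq> C \<Longrightarrow> C \<subseteq> car L \<Longrightarrow> leq L (lsup L B) (lsup L C)"
  by (rule lsup_least) (auto intro: lsup_in lsup_upper)

lemma lsup_le_iff: "B \<subseteq> car L \<Longrightarrow> t \<in> car L \<Longrightarrow> leq L (lsup L B) t \<longleftrightarrow> (\<forall>b\<in>B. leq L b t)"
proof
  assume B: "B \<subseteq> car L" and t: "t \<in> car L"
  show "leq L (lsup L B) t \<Longrightarrow> \<forall>b\<in>B. leq L b t"
  proof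
    fix b assume "leq L (lsup L B) t" "b \<in> B"
    then show "leq L b t" using lsup_upper[OF B] lsup_in[OF B] trans[of b "lsup L B" t] B t by blast
  qed
  show "\<forall>b\<in>B. leq L b t \<Longrightarrow> leq L (lsup L B) t" using lsup_least[OF B t] by blast
qed

lemma sup2_le: "a \<in> car L \<Longrightarrow> b \<in> car L \<Longrightarrow> leq L a b \<Longrightarrow> lsup L {a, b} = b"
  by (rule lsup_unique) (auto simp: is_lsup_def refl)

lemma mult_mono_r: assumes "a \<in> car L" "b \<in> car L" "c \<in> car L" "leq L a b"
  shows "leq L (mult L c a) (mult L c b)"
proof -
  have "mult L c b = lsup L {mult L c a, mult L c b}"
    using distr[of c a b] sup2_le[of a b] assms by simp
  then show ?thesis using lsup_upper[of "{mult L c a, mult L c b}"] assms mult_in by auto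
qed

lemma mult_mono_l: assumes "a \<in> car L" "b \<in> car L" "c \<in> car L" "leq L a b"
  shows "leq L (mult L a c) (mult L b c)"
proof -
  have "mult L b c = lsup L {mult L a c, mult L b c}"
    using distr[of c a b] sup2_le[of a b] assms by simp
  then show ?thesis using lsup_upper[of "{mult L a c, mult L b c}"] assms mult_in by auto
qed

lemma mult_le_l: "a \<in> car L \<Longrightarrow> b \<in> car L \<Longrightarrow> leq L (mult L a b) a"
  using mult_mono_r[of b "ltop L" a] top_greatest top_in top_unit by auto
lemma mult_le_r: "a \<in> car L \<Longrightarrow> b \<in> car L \<Longrightarrow> leq L (mult L a b) b"
  using mult_mono_l[of a "ltop L" b] top_greatest top_in top_unit by auto

lemma compact_in: "compact_el L c \<Longrightarrow> c \<in> car L"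
  unfolding compact_el_def by blast
lemma compact_fin: "compact_el L c \<Longrightarrow> B \<subseteq> car L \<Longrightarrow> leq L c (lsup L B) \<Longrightarrow>
    \<exists>B'\<subseteq>B. finite B' \<and> leq L c (lsup L B')"
  unfolding compact_el_def by blast

lemma sup_compacts: assumes a: "a \<in> car L"
  shows "a = lsup L {c. compact_el L c \<and> leq L c a}"
proof -
  obtain C where C: "\<forall>c\<in>C. compact_el L c" "a = lsup L C" using L2 a by blast
  have Ccar: "C \<subseteq> car L" using C compact_in by blast
  have S: "{c. compact_el L c \<and> leq L c a} \<subseteq> car L" using compact_in by blast
  have "C \<subseteq> {c. compact_el L c \<and> leq L c a}" using C lsup_upper Ccar by auto
  then have 1: "leq L a (lsup L {c. compact_el L c \<and> leq L c a})"
    using lsup_mono S C by metis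
  have 2: "leq L (lsup L {c. compact_el L c \<and> leq L c a}) a"
    using lsup_least[OF S a] by blast
  show ?thesis using antisym[OF a lsup_in[OF S] 1 2] .
qed

lemma finite_sup_compact:
  assumes F: "finite F" "\<forall>c\<in>F. compact_el L c"
  shows "compact_el L (lsup L F)"
proof -
  have Fc: "F \<subseteq> car L" using F compact_in by blast
  show ?thesis unfolding compact_el_def
  proof (intro conjI allI impI)
    show "lsup L F \<in> car L" using lsup_in Fc .
    fix B assume B: "B \<subseteq> car L" "leq L (lsup L F) (lsup L B)"
    have "\<forall>c\<in>F. \<exists>B'. B' \<subseteq> B \<and> finite B' \<and> leq L c (lsup L B')"
    proof
      fix c assume c: "c \<in> F"
      have cc: "c \<in> car L" using c Fc by blast
      have "leq L c (lsup L B)"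
        by (rule trans[OF lsup_upper[OF Fc c] B(2) cc lsup_in[OF Fc] lsup_in[OF B(1)]])
      then obtain B' where "B' \<subseteq> B" "finite B'" "leq L c (lsup L B')"
        using compact_fin[OF _ B(1)] F c by blast
      then show "\<exists>B'. B' \<subseteq> B \<and> finite B' \<and> leq L c (lsup L B')" by blast
    qed
    from bchoice[OF this] obtain g where g: "\<forall>c\<in>F. g c \<subseteq> B \<and> finite (g c) \<and> leq L c (lsup L (g c))"
      by blast
    let ?B = "\<Union>(g ` F)"
    have B1: "?B \<subseteq> B" "finite ?B" using g F by auto
    have "leq L (lsup L F) (lsup L ?B)"
    proof (rule lsup_least[OF Fc])
      show "lsup L ?B \<in> car L" using B1 B lsup_in by blast
      fix c assume c: "c \<in> F"
      have "leq L (lsup L (g c)) (lsup L ?B)" using lsup_mono[of "g c" ?B] c B1 B by blast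
      moreover have "g c \<subseteq> car L" "?B \<subseteq> car L" "c \<in> car L" using g c B B1 Fc by auto
      ultimately show "leq L c (lsup L ?B)"
        using trans[of c "lsup L (g c)" "lsup L ?B"] g c lsup_in by blast
    qed
    then show "\<exists>B'\<subseteq>B. finite B' \<and> leq L (lsup L F) (lsup L B')" using B1 by blast
  qed
qed

lemma pw_in: "c \<in> car L \<Longrightarrow> lpw L c n \<in> car L"
  by (induction n) (auto simp: mult_in)

lemma pw_add: "c \<in> car L \<Longrightarrow> mult L (lpw L c n) (lpw L c m) = lpw L c (n + m + 1)"
proof (induction m)
  case 0 then show ?case by simp
next
  case (Suc m)
  then show ?case using assoc[of "lpw L c n" "lpw L c m" c] pw_in by simp
qed

lemma pw_compact: "compact_el L c \<Longrightarrow> compact_el L (lpw L c n)"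
  by (induction n) (auto simp: L5)

lemma pw_anti: assumes "c \<in> car L" "j \<le> k" shows "leq L (lpw L c k) (lpw L c j)"
  using assms(2)
proof (induction k rule: dec_induct)
  case base then show ?case using refl pw_in assms by blast
next
  case (step k)
  have "leq L (lpw L c (Suc k)) (lpw L c k)" using mult_le_l[of "lpw L c k" c] pw_in assms by simp
  then show ?case using step trans[of "lpw L c (Suc k)" "lpw L c k" "lpw L c j"] pw_in assms by blast
qed

end

context IL
begin

lemma chain_max:
  assumes "finite F" "F \<noteq> {}" "F \<subseteq> car L" "\<forall>a\<in>F. \<forall>b\<in>F. leq L a b \<or> leq L b a"
  shows "\<exists>m\<in>F. \<forall>f\<in>F. leq L f m"
  using assms
proof (induction F rule: finite_ne_induct)
  case (singleton x)
  then show ?case using refl by auto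
next
  case (insert x F)
  then obtain m where m: "m \<in> F" "\<forall>f\<in>F. leq L f m" by auto
  have xc: "x \<in> car L" and mc: "m \<in> car L" using insert m by auto
  show ?case
  proof (cases "leq L x m")
    case True then show ?thesis using m by auto
  next
    case False
    then have mx: "leq L m x" using insert m by auto
    have "\<forall>f\<in>insert x F. leq L f x"
    proof
      fix f assume "f \<in> insert x F"
      then show "leq L f x"
      proof
        assume "f = x" then show ?thesis using refl xc by simp
      next
        assume f: "f \<in> F"
        then have "f \<in> car L" using insert by auto
        then show ?thesis using trans[of f m x] m f mx xc mc by auto
      qed
    qed
    then show ?thesis by auto
  qed
qed

lemma sq_le:
  assumes m: "m \<in> car L" and x: "x \<in> car L" and y: "y \<in> car L" and xy: "leq L (mult L x y) m"
  shows "leq L (mult L (lsup L {m, x}) (lsup L {m, y})) m"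
proof -
  have mx: "lsup L {m, x} \<in> car L" using lsup_in m x by simp
  have e1: "mult L (lsup L {m, x}) (lsup L {m, y}) = lsup L {mult L (lsup L {m, x}) m, mult L (lsup L {m, x}) y}"
    using distr[OF mx m y] by blast
  have e2: "mult L (lsup L {m, x}) y = lsup L {mult L m y, mult L x y}"
    using distr[OF y m x] by blast
  have l1: "leq L (mult L (lsup L {m, x}) m) m" using mult_le_r[OF mx m] .
  have l2: "leq L (mult L (lsup L {m, x}) y) m"
    unfolding e2 by (rule lsup_least) (use m x y xy mult_le_l[OF m y] mult_in in auto)
  show ?thesis
    unfolding e1 by (rule lsup_least) (use m x y l1 l2 mult_in mx in auto)
qed

lemma prime_in: "prime_el L p \<Longrightarrow> p \<in> car L"
  unfolding prime_el_def by blast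

lemma prime_pw:
  assumes p: "prime_el L p" and c: "c \<in> car L"
  shows "leq L (lpw L c n) p \<longleftrightarrow> leq L c p"
proof (induction n)
  case 0 then show ?case by simp
next
  case (Suc n)
  have pc: "p \<in> car L" using prime_in p .
  show ?case
  proof
    assume "leq L (lpw L c (Suc n)) p"
    then have "leq L (lpw L c n) p \<or> leq L c p"
      using p pw_in[OF c] c unfolding prime_el_def by simp
    then show "leq L c p" using Suc by blast
  next
    assume cp: "leq L c p"
    have "leq L (lpw L c (Suc n)) (lpw L c 0)" using pw_anti[OF c] by blast
    then show "leq L (lpw L c (Suc n)) p"
      using trans[of "lpw L c (Suc n)" c p] cp pc c pw_in[OF c, of "Suc n"] by simp
  qed
qed

lemma prime_exists:
  assumes s: "s \<in> car L" and c: "compact_el L c" and ns: "\<forall>n. \<not> leq L (lpw L c n) s"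
  shows "\<exists>p. prime_el L p \<and> leq L s p \<and> \<not> leq L c p"
proof -
  define S where "S = {q \<in> car L. leq L s q \<and> (\<forall>n. \<not> leq L (lpw L c n) q)}"
  have cc: "c \<in> car L" using compact_in c .
  have Sc: "S \<subseteq> car L" unfolding S_def by blast
  have po: "partial_order_on S (relation_of (leq L) S)"
  proof (rule partial_order_on_relation_ofI)
    fix a assume "a \<in> S" then show "leq L a a" using refl Sc by blast
  next
    fix a b d assume "a \<in> S" "b \<in> S" "d \<in> S" "leq L a b" "leq L b d"
    then show "leq L a d" using trans[of a b d] Sc by blast
  next
    fix a b assume "a \<in> S" "b \<in> S" "leq L a b" "leq L b a"
    then show "a = b" using antisym[of a b] Sc by blast
  qed
  have sS: "s \<in> S" unfolding S_def using s ns refl by blast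
  have ch: "\<exists>u\<in>S. \<forall>a\<in>C. leq L a u" if C: "C \<in> Chains (relation_of (leq L) S)" for C
  proof -
    have CS: "C \<subseteq> S" using Chains_relation_of C .
    have Cc: "C \<subseteq> car L" using CS Sc by blast
    have chain: "\<forall>a\<in>C. \<forall>b\<in>C. leq L a b \<or> leq L b a"
      using C unfolding Chains_def relation_of_def by blast
    show ?thesis
    proof (cases "C = {}")
      case True then show ?thesis using sS by blast
    next
      case False
      then obtain k where k: "k \<in> C" by blast
      have kS: "k \<in> S" using k CS by blast
      have kc: "k \<in> car L" using kS Sc by blast
      have uc: "lsup L C \<in> car L" using lsup_in Cc .
      have ku: "leq L k (lsup L C)" using lsup_upper Cc k .
      have su: "leq L s (lsup L C)"
        using trans[of s k "lsup L C"] kS ku s kc uc unfolding S_def by blast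
      have nu: "\<not> leq L (lpw L c n) (lsup L C)" for n
      proof
        assume le: "leq L (lpw L c n) (lsup L C)"
        have pc: "lpw L c n \<in> car L" using pw_in cc .
        obtain F where F: "F \<subseteq> C" "finite F" "leq L (lpw L c n) (lsup L F)"
          using compact_fin[OF pw_compact[OF c] Cc le] by blast
        have Fc: "F \<subseteq> car L" using F Cc by blast
        show False
        proof (cases "F = {}")
          case True
          have "leq L (lsup L F) k" using True lsup_least[of "{}" k] kc by simp
          then have "leq L (lpw L c n) k"
            using trans[of "lpw L c n" "lsup L F" k] F(3) pc kc lsup_in[OF Fc] by blast
          then show False using kS unfolding S_def by blast
        next
          case False
          obtain m where m: "m \<in> F" "\<forall>f\<in>F. leq L f m"
            using chain_max[OF F(2) False Fc] chain F(1) by blast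
          have mS: "m \<in> S" using m F CS by blast
          have mc: "m \<in> car L" using mS Sc by blast
          have "leq L (lsup L F) m" using lsup_least[OF Fc mc] m by blast
          then have "leq L (lpw L c n) m"
            using trans[of "lpw L c n" "lsup L F" m] F(3) pc mc lsup_in[OF Fc] by blast
          then show False using mS unfolding S_def by blast
        qed
      qed
      have "lsup L C \<in> S" unfolding S_def using uc su nu by blast
      moreover have "\<forall>a\<in>C. leq L a (lsup L C)" using lsup_upper Cc by blast
      ultimately show ?thesis by blast
    qed
  qed
  obtain m where mS: "m \<in> S" and mmax: "\<forall>a\<in>S. leq L m a \<longrightarrow> a = m"
    using predicate_Zorn[OF po ch] by blast
  have mc: "m \<in> car L" and sm: "leq L s m" and nm: "\<forall>n. \<not> leq L (lpw L c n) m"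
    using mS unfolding S_def by blast+
  have ncm: "\<not> leq L c m" using nm[rule_format, of 0] by simp
  have key: "\<exists>n. leq L (lpw L c n) (lsup L {m, x})" if x: "x \<in> car L" "\<not> leq L x m" for x
  proof (rule ccontr)
    assume nn: "\<nexists>n. leq L (lpw L c n) (lsup L {m, x})"
    have jc: "lsup L {m, x} \<in> car L" using lsup_in mc x by simp
    have mj: "leq L m (lsup L {m, x})" using lsup_upper[of "{m, x}" m] mc x by simp
    have xj: "leq L x (lsup L {m, x})" using lsup_upper[of "{m, x}" x] mc x by simp
    have "leq L s (lsup L {m, x})" using trans[OF sm mj s mc jc] .
    then have "lsup L {m, x} \<in> S" unfolding S_def using jc nn by blast
    then have "lsup L {m, x} = m" using mmax mj by blast
    then show False using xj x by simp
  qed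
  have "prime_el L m"
    unfolding prime_el_def
  proof (intro conjI ballI impI)
    show "m \<in> car L" by fact
    show "m \<noteq> ltop L"
    proof
      assume "m = ltop L"
      then show False using ncm top_greatest[OF cc] by simp
    qed
    fix x y assume x: "x \<in> car L" and y: "y \<in> car L" and xy: "leq L (mult L x y) m"
    show "leq L x m \<or> leq L y m"
    proof (rule ccontr)
      assume "\<not> (leq L x m \<or> leq L y m)"
      then obtain i j where i: "leq L (lpw L c i) (lsup L {m, x})" and j: "leq L (lpw L c j) (lsup L {m, y})"
        using key x y by blast
      have mxc: "lsup L {m, x} \<in> car L" using lsup_in mc x by simp
      have myc: "lsup L {m, y} \<in> car L" using lsup_in mc y by simp
      have pi: "lpw L c i \<in> car L" and pj: "lpw L c j \<in> car L" using pw_in cc by auto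
      have l1: "leq L (mult L (lpw L c i) (lpw L c j)) (mult L (lsup L {m, x}) (lpw L c j))"
        using mult_mono_l[OF pi mxc pj i] .
      have l2: "leq L (mult L (lsup L {m, x}) (lpw L c j)) (mult L (lsup L {m, x}) (lsup L {m, y}))"
        using mult_mono_r[OF pj myc mxc j] .
      have l3: "leq L (mult L (lsup L {m, x}) (lsup L {m, y})) m" using sq_le[OF mc x y xy] .
      have c1: "mult L (lpw L c i) (lpw L c j) \<in> car L" using mult_in pi pj by blast
      have c2: "mult L (lsup L {m, x}) (lpw L c j) \<in> car L" using mult_in mxc pj by blast
      have c3: "mult L (lsup L {m, x}) (lsup L {m, y}) \<in> car L" using mult_in mxc myc by blast
      have "leq L (mult L (lpw L c i) (lpw L c j)) m"
        using trans[OF trans[OF l1 l2 c1 c2 c3] l3 c1 c3 mc] .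
      then have "leq L (lpw L c (i + j + 1)) m" using pw_add[OF cc] by simp
      then show False using nm by blast
    qed
  qed
  then show ?thesis using sm ncm by blast
qed

end

context IL
begin

lemma D_sub: "Dset L a \<subseteq> {p. prime_el L p}"
  unfolding Dset_def by blast

lemma D_mono: assumes "a \<in> car L" "b \<in> car L" "leq L a b" shows "Dset L a \<subseteq> Dset L b"
proof
  fix p assume p: "p \<in> Dset L a"
  then have pp: "prime_el L p" "\<not> leq L a p" unfolding Dset_def by auto
  have "\<not> leq L b p"
  proof
    assume "leq L b p"
    then have "leq L a p" using trans[of a b p] assms prime_in[OF pp(1)] by blast
    then show False using pp by blast
  qed
  then show "p \<in> Dset L b" using pp unfolding Dset_def by blast
qed

lemma D_sup: assumes B: "B \<subseteq> car L" shows "Dset L (lsup L B) = \<Union>(Dset L ` B)"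
proof -
  have "p \<in> Dset L (lsup L B) \<longleftrightarrow> p \<in> \<Union>(Dset L ` B)" for p
  proof (cases "prime_el L p")
    case True
    then have pc: "p \<in> car L" using prime_in by blast
    have "p \<in> Dset L (lsup L B) \<longleftrightarrow> \<not> leq L (lsup L B) p" using True unfolding Dset_def by simp
    also have "\<dots> \<longleftrightarrow> \<not> (\<forall>b\<in>B. leq L b p)" using lsup_le_iff[OF B pc] by simp
    also have "\<dots> \<longleftrightarrow> p \<in> \<Union>(Dset L ` B)" using True unfolding Dset_def by simp
    finally show ?thesis .
  next
    case False then show ?thesis unfolding Dset_def by blast
  qed
  then show ?thesis by blast
qed

lemma D_mult: assumes a: "a \<in> car L" and b: "b \<in> car L"
  shows "Dset L (mult L a b) = Dset L a \<inter> Dset L b"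
proof -
  have "p \<in> Dset L (mult L a b) \<longleftrightarrow> p \<in> Dset L a \<inter> Dset L b" for p
  proof (cases "prime_el L p")
    case True
    then have pc: "p \<in> car L" using prime_in by blast
    have ab: "mult L a b \<in> car L" using mult_in a b by blast
    have 1: "leq L (mult L a b) p \<Longrightarrow> leq L a p \<or> leq L b p" using True a b unfolding prime_el_def by blast
    have 2: "leq L a p \<Longrightarrow> leq L (mult L a b) p" using trans[OF mult_le_l[OF a b] _ ab a pc] by blast
    have 3: "leq L b p \<Longrightarrow> leq L (mult L a b) p" using trans[OF mult_le_r[OF a b] _ ab b pc] by blast
    have "leq L (mult L a b) p \<longleftrightarrow> leq L a p \<or> leq L b p" using 1 2 3 by blast
    then show ?thesis using True unfolding Dset_def by simp
  next
    case False then show ?thesis unfolding Dset_def by blast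
  qed
  then show ?thesis by blast
qed

lemma D_top: "Dset L (ltop L) = {p. prime_el L p}"
proof -
  have "\<not> leq L (ltop L) p" if "prime_el L p" for p
  proof
    assume "leq L (ltop L) p"
    then have "p = ltop L" using antisym[OF prime_in[OF that] top_in] top_greatest[OF prime_in[OF that]] by blast
    then show False using that unfolding prime_el_def by blast
  qed
  then show ?thesis unfolding Dset_def by blast
qed

lemma D_pw: assumes c: "c \<in> car L" shows "Dset L (lpw L c n) = Dset L c"
proof -
  have "\<And>p. prime_el L p \<Longrightarrow> leq L (lpw L c n) p \<longleftrightarrow> leq L c p" using prime_pw c by blast
  then show ?thesis unfolding Dset_def by auto
qed

lemma union_D:
  assumes K: "\<forall>k\<in>K. \<exists>a\<in>car L. k = Dset L a"
  shows "\<Union>K = \<Union>(Dset L ` {a \<in> car L. Dset L a \<in> K})"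
proof
  show "\<Union>K \<subseteq> \<Union>(Dset L ` {a \<in> car L. Dset L a \<in> K})"
  proof
    fix x assume "x \<in> \<Union>K"
    then obtain k where k: "k \<in> K" "x \<in> k" by blast
    then obtain a where a: "a \<in> car L" "k = Dset L a" using K by blast
    then have "a \<in> {a \<in> car L. Dset L a \<in> K}" using k by blast
    then show "x \<in> \<Union>(Dset L ` {a \<in> car L. Dset L a \<in> K})" using a k by blast
  qed
  show "\<Union>(Dset L ` {a \<in> car L. Dset L a \<in> K}) \<subseteq> \<Union>K" by blast
qed

lemma istop: "istopology (\<lambda>U. \<exists>a\<in>car L. U = Dset L a)"
  unfolding istopology_def
proof (intro conjI allI impI)
  fix S T assume "\<exists>a\<in>car L. S = Dset L a" "\<exists>a\<in>car L. T = Dset L a"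
  then obtain a b where ab: "a \<in> car L" "b \<in> car L" "S = Dset L a" "T = Dset L b" by blast
  then have "S \<inter> T = Dset L (mult L a b)" using D_mult by simp
  then show "\<exists>c\<in>car L. S \<inter> T = Dset L c" using mult_in ab by blast
next
  fix K assume K: "\<forall>k\<in>K. \<exists>a\<in>car L. k = Dset L a"
  define B where "B = {a \<in> car L. Dset L a \<in> K}"
  have B: "B \<subseteq> car L" unfolding B_def by blast
  have "\<Union>K = \<Union>(Dset L ` B)" unfolding B_def by (rule union_D[OF K])
  then have "\<Union>K = Dset L (lsup L B)" using D_sup[OF B] by simp
  then show "\<exists>a\<in>car L. \<Union>K = Dset L a" using lsup_in[OF B] by blast
qed

lemma openin_Spec: "openin (Spec L) U \<longleftrightarrow> (\<exists>a\<in>car L. U = Dset L a)"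
  unfolding Spec_def using topology_inverse'[OF istop] by simp

lemma topspace_Spec: "topspace (Spec L) = {p. prime_el L p}"
proof -
  have "topspace (Spec L) = \<Union>{U. \<exists>a\<in>car L. U = Dset L a}"
    unfolding topspace_def openin_Spec by simp
  also have "\<dots> = {p. prime_el L p}"
  proof
    show "\<Union>{U. \<exists>a\<in>car L. U = Dset L a} \<subseteq> {p. prime_el L p}" using D_sub by blast
    show "{p. prime_el L p} \<subseteq> \<Union>{U. \<exists>a\<in>car L. U = Dset L a}" using D_top top_in by blast
  qed
  finally show ?thesis .
qed

lemma openin_D: "a \<in> car L \<Longrightarrow> openin (Spec L) (Dset L a)"
  using openin_Spec by blast

lemma D_compact_le:
  assumes c: "compact_el L c" and a: "a \<in> car L" and sub: "Dset L c \<subseteq> Dset L a"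
  shows "\<exists>n. leq L (lpw L c n) a"
proof (rule ccontr)
  assume "\<nexists>n. leq L (lpw L c n) a"
  then obtain p where p: "prime_el L p" "leq L a p" "\<not> leq L c p" using prime_exists[OF a c] by blast
  then have "p \<in> Dset L c" unfolding Dset_def by blast
  moreover have "p \<notin> Dset L a" using p unfolding Dset_def by blast
  ultimately show False using sub by blast
qed

lemma compactin_D: assumes c: "compact_el L c" shows "compactin (Spec L) (Dset L c)"
  unfolding compactin_def
proof (intro conjI allI impI)
  have cc: "c \<in> car L" using compact_in c .
  show "Dset L c \<subseteq> topspace (Spec L)" using topspace_Spec D_sub by blast
  fix U assume U: "(\<forall>B\<in>U. openin (Spec L) B) \<and> Dset L c \<subseteq> \<Union>U"
  define B where "B = {a \<in> car L. Dset L a \<in> U}"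
  have B: "B \<subseteq> car L" unfolding B_def by blast
  have "\<forall>k\<in>U. \<exists>a\<in>car L. k = Dset L a" using U openin_Spec by blast
  then have "\<Union>U = \<Union>(Dset L ` B)" unfolding B_def by (rule union_D)
  then have UD: "\<Union>U = Dset L (lsup L B)" using D_sup[OF B] by simp
  obtain n where n: "leq L (lpw L c n) (lsup L B)"
    using D_compact_le[OF c lsup_in[OF B]] U UD by auto
  obtain B' where B': "B' \<subseteq> B" "finite B'" "leq L (lpw L c n) (lsup L B')"
    using compact_fin[OF pw_compact[OF c] B n] by blast
  have B'c: "B' \<subseteq> car L" using B' B by blast
  have "Dset L c = Dset L (lpw L c n)" using D_pw cc by simp
  also have "\<dots> \<subseteq> Dset L (lsup L B')" using D_mono[OF pw_in[OF cc] lsup_in[OF B'c] B'(3)] .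
  also have "\<dots> = \<Union>(Dset L ` B')" using D_sup[OF B'c] .
  finally have "Dset L c \<subseteq> \<Union>(Dset L ` B')" .
  moreover have "Dset L ` B' \<subseteq> U" using B' unfolding B_def by blast
  moreover have "finite (Dset L ` B')" using B' by blast
  ultimately show "\<exists>F. finite F \<and> F \<subseteq> U \<and> Dset L c \<subseteq> \<Union>F" by blast
qed

lemma compact_open_D:
  assumes U: "openin (Spec L) U" "compactin (Spec L) U"
  shows "\<exists>c. compact_el L c \<and> U = Dset L c"
proof -
  obtain a where a: "a \<in> car L" "U = Dset L a" using U openin_Spec by blast
  define Cs where "Cs = {c. compact_el L c \<and> leq L c a}"
  have Csc: "Cs \<subseteq> car L" unfolding Cs_def using compact_in by blast
  have "U = Dset L (lsup L Cs)" using a sup_compacts[OF a(1)] unfolding Cs_def by simp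
  also have "\<dots> = \<Union>(Dset L ` Cs)" using D_sup[OF Csc] .
  finally have UC: "U = \<Union>(Dset L ` Cs)" .
  have "\<forall>V\<in>Dset L ` Cs. openin (Spec L) V" using openin_D Csc by blast
  then obtain F where F: "finite F" "F \<subseteq> Dset L ` Cs" "U \<subseteq> \<Union>F"
    using U(2) UC unfolding compactin_def by (metis order_refl)
  obtain Cs' where Cs': "Cs' \<subseteq> Cs" "finite Cs'" "F = Dset L ` Cs'"
    using finite_subset_image[OF F(1) F(2)] by blast
  have Cs'c: "Cs' \<subseteq> car L" using Cs' Csc by blast
  have "U = \<Union>(Dset L ` Cs')" using F Cs' UC by blast
  also have "\<dots> = Dset L (lsup L Cs')" using D_sup[OF Cs'c] by simp
  finally have "U = Dset L (lsup L Cs')" .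
  moreover have "compact_el L (lsup L Cs')"
    using finite_sup_compact[OF Cs'(2)] Cs' unfolding Cs_def by blast
  ultimately show ?thesis by blast
qed

lemma closure_Spec:
  assumes p: "prime_el L p"
  shows "(Spec L) closure_of {p} = {q. prime_el L q \<and> leq L p q}"
proof -
  have "q \<in> (Spec L) closure_of {p} \<longleftrightarrow> prime_el L q \<and> leq L p q" for q
  proof
    assume q: "q \<in> (Spec L) closure_of {p}"
    then have qp: "prime_el L q" unfolding closure_of_def topspace_Spec by blast
    have "\<forall>T. q \<in> T \<and> openin (Spec L) T \<longrightarrow> p \<in> T" using q unfolding closure_of_def by blast
    then have "q \<in> Dset L p \<longrightarrow> p \<in> Dset L p" using openin_D prime_in[OF p] by blast
    moreover have "p \<notin> Dset L p" using refl[OF prime_in[OF p]] unfolding Dset_def by simp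
    ultimately have "q \<notin> Dset L p" by blast
    then have "leq L p q" using qp unfolding Dset_def by simp
    then show "prime_el L q \<and> leq L p q" using qp by (rule conjI[rotated])
  next
    assume q: "prime_el L q \<and> leq L p q"
    have qc: "q \<in> car L" using q prime_in by blast
    have pT: "p \<in> T" if T: "q \<in> T" "openin (Spec L) T" for T
    proof -
      obtain a where a: "a \<in> car L" "T = Dset L a" using T(2) openin_Spec by blast
      have naq: "\<not> leq L a q" using T(1) a(2) unfolding Dset_def by simp
      have "leq L a p \<Longrightarrow> leq L a q" using trans[OF _ _ a(1) prime_in[OF p] qc] q by blast
      then have "\<not> leq L a p" using naq by blast
      then show "p \<in> T" unfolding a(2) Dset_def using p by simp
    qed
    show "q \<in> (Spec L) closure_of {p}"
      using q pT by (simp add: closure_of_def topspace_Spec)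
  qed
  then show ?thesis by blast
qed

lemma closedin_Spec:
  assumes Z: "closedin (Spec L) Z"
  shows "\<exists>a\<in>car L. Z = {p. prime_el L p \<and> leq L a p}"
proof -
  have "openin (Spec L) (topspace (Spec L) - Z)" "Z \<subseteq> topspace (Spec L)"
    using Z unfolding closedin_def by blast+
  then obtain a where a: "a \<in> car L" "topspace (Spec L) - Z = Dset L a" using openin_Spec by blast
  then have "Z = {p. prime_el L p \<and> leq L a p}"
    using \<open>Z \<subseteq> topspace (Spec L)\<close> unfolding topspace_Spec Dset_def by blast
  then show ?thesis using a by blast
qed

lemma closedin_V: assumes a: "a \<in> car L" shows "closedin (Spec L) {p. prime_el L p \<and> leq L a p}"
proof -
  have "topspace (Spec L) - {p. prime_el L p \<and> leq L a p} = Dset L a"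
    unfolding topspace_Spec Dset_def by blast
  moreover have "{p. prime_el L p \<and> leq L a p} \<subseteq> topspace (Spec L)" unfolding topspace_Spec by blast
  ultimately show ?thesis unfolding closedin_def using openin_D[OF a] by simp
qed

lemma spectral_Spec: "spectral_space (Spec L)"
  unfolding spectral_space_def
proof (intro conjI allI impI)
  show "t0_space (Spec L)"
    unfolding t0_space_def
  proof (intro ballI impI)
    fix p q assume p: "p \<in> topspace (Spec L)" and q: "q \<in> topspace (Spec L)" and pq: "p \<noteq> q"
    have pp: "prime_el L p" and qp: "prime_el L q" using p q topspace_Spec by auto
    have pc: "p \<in> car L" and qc: "q \<in> car L" using pp qp prime_in by auto
    show "\<exists>U. openin (Spec L) U \<and> (p \<notin> U \<longleftrightarrow> q \<in> U)"
    proof (cases "leq L p q")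
      case True
      then have "\<not> leq L q p" using antisym[OF pc qc] pq by blast
      then have "p \<in> Dset L q" "q \<notin> Dset L q" using pp refl[OF qc] unfolding Dset_def by auto
      then show ?thesis using openin_D[OF qc] by blast
    next
      case False
      then have "q \<in> Dset L p" "p \<notin> Dset L p" using qp refl[OF pc] unfolding Dset_def by auto
      then show ?thesis using openin_D[OF pc] by blast
    qed
  qed
  show "compactin (Spec L) (topspace (Spec L))"
    using compactin_D[OF top_compact] D_top topspace_Spec by simp
next
  fix U V assume "openin (Spec L) U \<and> compactin (Spec L) U \<and> openin (Spec L) V \<and> compactin (Spec L) V"
  then obtain c d where c: "compact_el L c" "U = Dset L c" and d: "compact_el L d" "V = Dset L d"
    using compact_open_D by metis
  have "U \<inter> V = Dset L (mult L c d)" using D_mult c d compact_in by simp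
  then show "compactin (Spec L) (U \<inter> V)" using compactin_D[OF L5[OF c(1) d(1)]] by simp
next
  fix W assume "openin (Spec L) W"
  then obtain a where a: "a \<in> car L" "W = Dset L a" using openin_Spec by blast
  define Cs where "Cs = {c. compact_el L c \<and> leq L c a}"
  have Csc: "Cs \<subseteq> car L" unfolding Cs_def using compact_in by blast
  have "W = Dset L (lsup L Cs)" using a sup_compacts[OF a(1)] unfolding Cs_def by simp
  also have "\<dots> = \<Union>(Dset L ` Cs)" using D_sup[OF Csc] .
  finally have "W = \<Union>(Dset L ` Cs)" .
  moreover have "\<forall>U\<in>Dset L ` Cs. openin (Spec L) U \<and> compactin (Spec L) U"
  proof
    fix U assume "U \<in> Dset L ` Cs"
    then obtain c where c: "c \<in> Cs" "U = Dset L c" by blast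
    have "compact_el L c" using c(1) unfolding Cs_def by simp
    then show "openin (Spec L) U \<and> compactin (Spec L) U"
      using openin_D[OF compact_in] compactin_D c(2) by simp
  qed
  ultimately show "\<exists>\<B>. (\<forall>U\<in>\<B>. openin (Spec L) U \<and> compactin (Spec L) U) \<and> W = \<Union>\<B>"
    by (intro exI[of _ "Dset L ` Cs"] conjI)
next
  fix Z assume Z: "irreducible_closed (Spec L) Z"
  have Zc: "closedin (Spec L) Z" and Zne: "Z \<noteq> {}"
    and Zirr: "\<And>C1 C2. closedin (Spec L) C1 \<Longrightarrow> closedin (Spec L) C2 \<Longrightarrow> Z \<subseteq> C1 \<union> C2 \<Longrightarrow> Z \<subseteq> C1 \<or> Z \<subseteq> C2"
    using Z unfolding irreducible_closed_def by auto
  obtain a where a: "a \<in> car L" "Z = {p. prime_el L p \<and> leq L a p}"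
    using closedin_Spec[OF Zc] by blast
  obtain q0 where q0: "q0 \<in> Z" using Zne by blast
  define P where "P = {b \<in> car L. \<forall>q\<in>Z. leq L b q}"
  have Pc: "P \<subseteq> car L" unfolding P_def by blast
  define p where "p = lsup L P"
  have pc: "p \<in> car L" unfolding p_def using lsup_in[OF Pc] .
  have aP: "a \<in> P" unfolding P_def using a by blast
  have ap: "leq L a p" unfolding p_def using lsup_upper[OF Pc aP] .
  have pq: "leq L p q" if "q \<in> Z" for q
  proof -
    have qc: "q \<in> car L" using that a prime_in by blast
    show ?thesis unfolding p_def by (rule lsup_least[OF Pc qc]) (use that in \<open>auto simp: P_def\<close>)
  qed
  have pp: "prime_el L p"
    unfolding prime_el_def
  proof (intro conjI ballI impI)
    show "p \<in> car L" by fact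
    show "p \<noteq> ltop L"
    proof
      assume "p = ltop L"
      have q0c: "q0 \<in> car L" using q0 a prime_in by blast
      have "leq L (ltop L) q0" using pq[OF q0] \<open>p = ltop L\<close> by simp
      then have "q0 = ltop L" using antisym[OF q0c top_in] top_greatest[OF q0c] by blast
      then show False using q0 a unfolding prime_el_def by blast
    qed
    fix x y assume x: "x \<in> car L" and y: "y \<in> car L" and xy: "leq L (mult L x y) p"
    have "Z \<subseteq> {q. prime_el L q \<and> leq L x q} \<union> {q. prime_el L q \<and> leq L y q}"
    proof
      fix q assume q: "q \<in> Z"
      then have qp: "prime_el L q" using a by blast
      have "leq L (mult L x y) q" using trans[OF xy pq[OF q] mult_in[OF x y] pc prime_in[OF qp]] .
      then show "q \<in> {q. prime_el L q \<and> leq L x q} \<union> {q. prime_el L q \<and> leq L y q}"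
        using qp x y unfolding prime_el_def by blast
    qed
    then have "Z \<subseteq> {q. prime_el L q \<and> leq L x q} \<or> Z \<subseteq> {q. prime_el L q \<and> leq L y q}"
      using Zirr[OF closedin_V[OF x] closedin_V[OF y]] by blast
    then have "x \<in> P \<or> y \<in> P" unfolding P_def using x y by blast
    then show "leq L x p \<or> leq L y p" unfolding p_def using lsup_upper[OF Pc] by blast
  qed
  have "p \<in> Z" using pp ap a by blast
  moreover have "(Spec L) closure_of {p} = Z"
  proof
    show "(Spec L) closure_of {p} \<subseteq> Z"
    proof
      fix q assume "q \<in> (Spec L) closure_of {p}"
      then have q: "prime_el L q" "leq L p q" unfolding closure_Spec[OF pp] by auto
      have "leq L a q" using trans[OF ap q(2) a(1) pc prime_in[OF q(1)]] .
      then show "q \<in> Z" using a q by blast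
    qed
    show "Z \<subseteq> (Spec L) closure_of {p}"
      unfolding closure_Spec[OF pp] using a pq by blast
  qed
  ultimately show "\<exists>x\<in>Z. (Spec L) closure_of {x} = Z" by blast
qed

end

lemma car_Lopen[simp]: "car (Lopen X) = {U. openin X U}"
  and leq_Lopen[simp]: "leq (Lopen X) = (\<subseteq>)"
  and mult_Lopen[simp]: "mult (Lopen X) = (\<inter>)"
  unfolding Lopen_def car_def leq_def mult_def by simp_all

lemma is_lsup_Lopen: "B \<subseteq> {U. openin X U} \<Longrightarrow> is_lsup (Lopen X) B (\<Union>B)"
  unfolding is_lsup_def by auto

lemma lsup_Lopen: "B \<subseteq> {U. openin X U} \<Longrightarrow> lsup (Lopen X) B = \<Union>B"
  by (rule lsup_eqI[OF is_lsup_Lopen]) auto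

lemma ltop_Lopen: "ltop (Lopen X) = topspace X"
  unfolding ltop_def by (simp add: lsup_Lopen topspace_def)

lemma compact_el_Lopen: "compact_el (Lopen X) U \<longleftrightarrow> openin X U \<and> compactin X U"
proof
  assume c: "compact_el (Lopen X) U"
  then have U: "openin X U" unfolding compact_el_def by simp
  have "compactin X U"
    unfolding compactin_def
  proof (intro conjI allI impI)
    show "U \<subseteq> topspace X" using openin_subset[OF U] .
    fix \<U> assume \<U>: "(\<forall>V\<in>\<U>. openin X V) \<and> U \<subseteq> \<Union>\<U>"
    then have sub: "\<U> \<subseteq> car (Lopen X)" by auto
    have "lsup (Lopen X) \<U> = \<Union>\<U>" using \<U> by (intro lsup_Lopen) auto
    then have "leq (Lopen X) U (lsup (Lopen X) \<U>)" using \<U> by simp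
    then obtain B' where B': "B' \<subseteq> \<U>" "finite B'" "leq (Lopen X) U (lsup (Lopen X) B')"
      using c sub unfolding compact_el_def by meson
    have "lsup (Lopen X) B' = \<Union>B'" using B' sub by (intro lsup_Lopen) auto
    then show "\<exists>F. finite F \<and> F \<subseteq> \<U> \<and> U \<subseteq> \<Union>F" using B' by auto
  qed
  then show "openin X U \<and> compactin X U" using U by blast
next
  assume U: "openin X U \<and> compactin X U"
  show "compact_el (Lopen X) U"
    unfolding compact_el_def
  proof (intro conjI allI impI)
    show "U \<in> car (Lopen X)" using U by simp
    fix B assume B: "B \<subseteq> car (Lopen X)" "leq (Lopen X) U (lsup (Lopen X) B)"
    have "lsup (Lopen X) B = \<Union>B" using B(1) by (intro lsup_Lopen) auto
    then have "U \<subseteq> \<Union>B" using B(2) by simp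
    then obtain F where F: "finite F" "F \<subseteq> B" "U \<subseteq> \<Union>F"
      using U B(1) unfolding compactin_def by (metis car_Lopen mem_Collect_eq subsetD)
    have "lsup (Lopen X) F = \<Union>F" using F B by (intro lsup_Lopen) auto
    then have "finite F \<and> leq (Lopen X) U (lsup (Lopen X) F)" using F by simp
    then show "\<exists>B'\<subseteq>B. finite B' \<and> leq (Lopen X) U (lsup (Lopen X) B')" using F(2) by blast
  qed
qed

lemma IL_Lopen:
  assumes X: "spectral_space X"
  shows "ideal_lattice (Lopen X)"
proof -
  have sp: "compactin X (topspace X)"
    "\<And>U V. openin X U \<Longrightarrow> compactin X U \<Longrightarrow> openin X V \<Longrightarrow> compactin X V \<Longrightarrow> compactin X (U \<inter> V)"
    "\<And>W. openin X W \<Longrightarrow> \<exists>\<B>. (\<forall>U\<in>\<B>. openin X U \<and> compactin X U) \<and> W = \<Union>\<B>"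
    using X unfolding spectral_space_def by blast+
  have h1: "\<forall>a\<in>car (Lopen X). leq (Lopen X) a a" by simp
  have h2: "\<forall>a\<in>car (Lopen X). \<forall>b\<in>car (Lopen X). leq (Lopen X) a b \<and> leq (Lopen X) b a \<longrightarrow> a = b" by auto
  have h3: "\<forall>a\<in>car (Lopen X). \<forall>b\<in>car (Lopen X). \<forall>c\<in>car (Lopen X). leq (Lopen X) a b \<and> leq (Lopen X) b c \<longrightarrow> leq (Lopen X) a c" by auto
  have h4: "\<forall>a\<in>car (Lopen X). \<forall>b\<in>car (Lopen X). mult (Lopen X) a b \<in> car (Lopen X)" by (simp add: openin_Int)
  have h5: "\<forall>a\<in>car (Lopen X). \<forall>b\<in>car (Lopen X). \<forall>c\<in>car (Lopen X). mult (Lopen X) (mult (Lopen X) a b) c = mult (Lopen X) a (mult (Lopen X) b c)"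
    by (simp add: Int_assoc)
  have h6: "\<forall>B \<subseteq> car (Lopen X). \<exists>s. is_lsup (Lopen X) B s"
  proof (intro allI impI)
    fix B assume "B \<subseteq> car (Lopen X)"
    then show "\<exists>s. is_lsup (Lopen X) B s" by (intro exI[of _ "\<Union>B"] is_lsup_Lopen) simp
  qed
  have h7: "\<forall>a\<in>car (Lopen X). \<exists>C. (\<forall>c\<in>C. compact_el (Lopen X) c) \<and> a = lsup (Lopen X) C"
  proof
    fix W assume "W \<in> car (Lopen X)"
    then obtain \<B> where B: "\<forall>U\<in>\<B>. openin X U \<and> compactin X U" "W = \<Union>\<B>" using sp(3) by auto
    then have "lsup (Lopen X) \<B> = \<Union>\<B>" by (intro lsup_Lopen) auto
    then show "\<exists>C. (\<forall>c\<in>C. compact_el (Lopen X) c) \<and> W = lsup (Lopen X) C"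
      using B compact_el_Lopen by metis
  qed
  have h8: "\<forall>a\<in>car (Lopen X). \<forall>b\<in>car (Lopen X). \<forall>c\<in>car (Lopen X).
        mult (Lopen X) a (lsup (Lopen X) {b, c}) = lsup (Lopen X) {mult (Lopen X) a b, mult (Lopen X) a c} \<and>
        mult (Lopen X) (lsup (Lopen X) {b, c}) a = lsup (Lopen X) {mult (Lopen X) b a, mult (Lopen X) c a}"
  proof (intro ballI)
    fix a b c assume "a \<in> car (Lopen X)" "b \<in> car (Lopen X)" "c \<in> car (Lopen X)"
    then have o: "openin X a" "openin X b" "openin X c" by auto
    have e1: "lsup (Lopen X) {b, c} = b \<union> c" using o by (subst lsup_Lopen) auto
    have e2: "lsup (Lopen X) {a \<inter> b, a \<inter> c} = (a \<inter> b) \<union> (a \<inter> c)" using o by (subst lsup_Lopen) auto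
    have e3: "lsup (Lopen X) {b \<inter> a, c \<inter> a} = (b \<inter> a) \<union> (c \<inter> a)" using o by (subst lsup_Lopen) auto
    show "mult (Lopen X) a (lsup (Lopen X) {b, c}) = lsup (Lopen X) {mult (Lopen X) a b, mult (Lopen X) a c} \<and>
        mult (Lopen X) (lsup (Lopen X) {b, c}) a = lsup (Lopen X) {mult (Lopen X) b a, mult (Lopen X) c a}"
      using e1 e2 e3 by auto
  qed
  have h9: "compact_el (Lopen X) (ltop (Lopen X))"
    unfolding compact_el_Lopen ltop_Lopen using sp(1) by simp
  have h10: "\<forall>a\<in>car (Lopen X). mult (Lopen X) (ltop (Lopen X)) a = a \<and> mult (Lopen X) a (ltop (Lopen X)) = a"
    unfolding ltop_Lopen using openin_subset by auto
  have h11: "\<forall>a b. compact_el (Lopen X) a \<and> compact_el (Lopen X) b \<longrightarrow> compact_el (Lopen X) (mult (Lopen X) a b)"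
    unfolding compact_el_Lopen using sp(2) by auto
  show ?thesis unfolding ideal_lattice_def
    by (intro conjI h1 h2 h3 h4 h5 h6 h7 h8 h9 h10 h11)
qed

lemma hom_in: "ilat_hom L L' \<phi> \<Longrightarrow> a \<in> car L \<Longrightarrow> \<phi> a \<in> car L'"
  unfolding ilat_hom_def by blast
lemma hom_sup: "ilat_hom L L' \<phi> \<Longrightarrow> B \<subseteq> car L \<Longrightarrow> \<phi> (lsup L B) = lsup L' (\<phi> ` B)"
  unfolding ilat_hom_def by blast
lemma hom_top: "ilat_hom L L' \<phi> \<Longrightarrow> \<phi> (ltop L) = ltop L'"
  unfolding ilat_hom_def by blast
lemma hom_mult: "ilat_hom L L' \<phi> \<Longrightarrow> a \<in> car L \<Longrightarrow> b \<in> car L \<Longrightarrow> \<phi> (mult L a b) = mult L' (\<phi> a) (\<phi> b)"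
  unfolding ilat_hom_def by blast

lemma hom_mono:
  assumes L: "ideal_lattice L" and L': "ideal_lattice L'" and h: "ilat_hom L L' \<phi>"
    and a: "a \<in> car L" and b: "b \<in> car L" and ab: "leq L a b"
  shows "leq L' (\<phi> a) (\<phi> b)"
proof -
  interpret A: IL L by (rule IL.intro[OF L])
  interpret B: IL L' by (rule IL.intro[OF L'])
  have "\<phi> b = \<phi> (lsup L {a, b})" using A.sup2_le[OF a b ab] by simp
  also have "\<dots> = lsup L' {\<phi> a, \<phi> b}" using hom_sup[OF h, of "{a, b}"] a b by simp
  finally have e: "\<phi> b = lsup L' {\<phi> a, \<phi> b}" .
  have "leq L' (\<phi> a) (lsup L' {\<phi> a, \<phi> b})"
    using B.lsup_upper[of "{\<phi> a, \<phi> b}" "\<phi> a"] hom_in[OF h a] hom_in[OF h b] by simp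
  then show ?thesis using e by simp
qed

lemma hom_Lopen_mono:
  assumes h: "ilat_hom L (Lopen X) \<phi>" and IL: "ideal_lattice L"
    and a: "a \<in> car L" and b: "b \<in> car L" and ab: "leq L a b"
  shows "\<phi> a \<subseteq> \<phi> b"
proof -
  interpret A: IL L by (rule IL.intro[OF IL])
  have "\<phi> b = \<phi> (lsup L {a, b})" using A.sup2_le[OF a b ab] by simp
  also have "\<dots> = lsup (Lopen X) {\<phi> a, \<phi> b}" using hom_sup[OF h, of "{a, b}"] a b by simp
  also have "\<dots> = \<phi> a \<union> \<phi> b" using hom_in[OF h a] hom_in[OF h b] by (subst lsup_Lopen) auto
  finally show ?thesis by blast
qed

lemma hom_Lopen_Lopen_mono:
  assumes h: "ilat_hom (Lopen X) (Lopen Y) \<phi>"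
    and a: "openin X U" and b: "openin X V" and ab: "U \<subseteq> V"
  shows "\<phi> U \<subseteq> \<phi> V"
proof -
  have "lsup (Lopen X) {U, V} = V" using a b ab by (subst lsup_Lopen) auto
  then have "\<phi> V = \<phi> (lsup (Lopen X) {U, V})" by simp
  also have "\<dots> = lsup (Lopen Y) {\<phi> U, \<phi> V}" using hom_sup[OF h, of "{U, V}"] a b by simp
  also have "\<dots> = \<phi> U \<union> \<phi> V" using hom_in[OF h, of U] hom_in[OF h, of V] a b by (subst lsup_Lopen) auto
  finally show ?thesis by blast
qed

lemma spec_char:
  assumes L: "ideal_lattice L" and L': "ideal_lattice L'" and h: "ilat_hom L' L \<psi>"
    and p: "p \<in> car L" and a: "a \<in> car L'"
  shows "leq L' a (spec_map L' L \<psi> p) \<longleftrightarrow> leq L (\<psi> a) p"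
proof -
  interpret A: IL L by (rule IL.intro[OF L])
  interpret B: IL L' by (rule IL.intro[OF L'])
  define S where "S = {a \<in> car L'. leq L (\<psi> a) p}"
  have Sc: "S \<subseteq> car L'" unfolding S_def by blast
  have q: "spec_map L' L \<psi> p = lsup L' S" unfolding spec_map_def S_def by simp
  have qc: "lsup L' S \<in> car L'" using B.lsup_in[OF Sc] .
  have pS: "\<psi> ` S \<subseteq> car L" using hom_in[OF h] Sc by blast
  have "\<psi> (lsup L' S) = lsup L (\<psi> ` S)" using hom_sup[OF h Sc] .
  moreover have "leq L (lsup L (\<psi> ` S)) p"
    by (rule A.lsup_least[OF pS p]) (auto simp: S_def)
  ultimately have psq: "leq L (\<psi> (lsup L' S)) p" by simp
  show ?thesis
  proof
    assume "leq L' a (spec_map L' L \<psi> p)"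
    then have "leq L' a (lsup L' S)" using q by simp
    then have "leq L (\<psi> a) (\<psi> (lsup L' S))" using hom_mono[OF L' L h a qc] by blast
    then show "leq L (\<psi> a) p" using A.trans[OF _ psq hom_in[OF h a] hom_in[OF h qc] p] by blast
  next
    assume "leq L (\<psi> a) p"
    then have "a \<in> S" unfolding S_def using a by blast
    then show "leq L' a (spec_map L' L \<psi> p)" using q B.lsup_upper[OF Sc] by simp
  qed
qed

lemma spec_in:
  assumes L': "ideal_lattice L'"
  shows "spec_map L' L \<psi> p \<in> car L'"
proof -
  interpret B: IL L' by (rule IL.intro[OF L'])
  show ?thesis unfolding spec_map_def by (rule B.lsup_in) blast
qed

lemma spec_prime:
  assumes L: "ideal_lattice L" and L': "ideal_lattice L'" and h: "ilat_hom L' L \<psi>"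
    and p: "prime_el L p"
  shows "prime_el L' (spec_map L' L \<psi> p)"
proof -
  interpret A: IL L by (rule IL.intro[OF L])
  interpret B: IL L' by (rule IL.intro[OF L'])
  have pc: "p \<in> car L" using A.prime_in[OF p] .
  let ?q = "spec_map L' L \<psi> p"
  have qc: "?q \<in> car L'" using spec_in[OF L'] .
  show ?thesis unfolding prime_el_def
  proof (intro conjI ballI impI)
    show "?q \<in> car L'" by fact
    show "?q \<noteq> ltop L'"
    proof
      assume e: "?q = ltop L'"
      have "leq L' (ltop L') ?q" using e B.refl[OF B.top_in] by simp
      then have "leq L (\<psi> (ltop L')) p" using spec_char[OF L L' h pc B.top_in] by blast
      then have "leq L (ltop L) p" using hom_top[OF h] by simp
      then have "p = ltop L" using A.antisym[OF pc A.top_in] A.top_greatest[OF pc] by blast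
      then show False using p unfolding prime_el_def by blast
    qed
    fix x y assume x: "x \<in> car L'" and y: "y \<in> car L'" and xy: "leq L' (mult L' x y) ?q"
    have "leq L (\<psi> (mult L' x y)) p" using spec_char[OF L L' h pc B.mult_in[OF x y]] xy by blast
    then have "leq L (mult L (\<psi> x) (\<psi> y)) p" using hom_mult[OF h x y] by simp
    then have "leq L (\<psi> x) p \<or> leq L (\<psi> y) p" using p hom_in[OF h x] hom_in[OF h y] unfolding prime_el_def by blast
    then show "leq L' x ?q \<or> leq L' y ?q" using spec_char[OF L L' h pc x] spec_char[OF L L' h pc y] by blast
  qed
qed

lemma spec_D:
  assumes L: "ideal_lattice L" and L': "ideal_lattice L'" and h: "ilat_hom L' L \<psi>"
    and p: "prime_el L p" and a: "a \<in> car L'"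
  shows "spec_map L' L \<psi> p \<in> Dset L' a \<longleftrightarrow> p \<in> Dset L (\<psi> a)"
proof -
  interpret A: IL L by (rule IL.intro[OF L])
  have "leq L' a (spec_map L' L \<psi> p) \<longleftrightarrow> leq L (\<psi> a) p"
    using spec_char[OF L L' h A.prime_in[OF p] a] .
  then show ?thesis using spec_prime[OF L L' h p] p unfolding Dset_def by simp
qed

lemma spec_cont:
  assumes L: "ideal_lattice L" and L': "ideal_lattice L'" and h: "ilat_hom L' L \<psi>"
  shows "continuous_map (Spec L) (Spec L') (spec_map L' L \<psi>)"
proof -
  interpret A: IL L by (rule IL.intro[OF L])
  interpret B: IL L' by (rule IL.intro[OF L'])
  show ?thesis unfolding continuous_map_def
  proof (intro conjI allI impI)
    show "spec_map L' L \<psi> \<in> topspace (Spec L) \<rightarrow> topspace (Spec L')"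
      unfolding A.topspace_Spec B.topspace_Spec using spec_prime[OF L L' h] by blast
    fix U assume "openin (Spec L') U"
    then obtain a where a: "a \<in> car L'" "U = Dset L' a" using B.openin_Spec by blast
    have "{x \<in> topspace (Spec L). spec_map L' L \<psi> x \<in> U} = Dset L (\<psi> a)"
    proof -
      have "x \<in> topspace (Spec L) \<and> spec_map L' L \<psi> x \<in> U \<longleftrightarrow> x \<in> Dset L (\<psi> a)" for x
      proof (cases "prime_el L x")
        case True
        then show ?thesis using spec_D[OF L L' h True a(1)] a(2) A.topspace_Spec by simp
      next
        case False
        then show ?thesis using A.topspace_Spec unfolding Dset_def by simp
      qed
      then show ?thesis by blast
    qed
    then show "openin (Spec L) {x \<in> topspace (Spec L). spec_map L' L \<psi> x \<in> U}"
      using A.openin_D[OF hom_in[OF h a(1)]] by simp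
  qed
qed

lemma spec_id:
  assumes L: "ideal_lattice L" and p: "prime_el L p"
  shows "spec_map L L id p = p"
proof -
  interpret A: IL L by (rule IL.intro[OF L])
  have pc: "p \<in> car L" using A.prime_in[OF p] .
  have S: "{a \<in> car L. leq L (id a) p} \<subseteq> car L" by blast
  have "is_lsup L {a \<in> car L. leq L (id a) p} p"
    unfolding is_lsup_def using pc A.refl[OF pc] by auto
  then show ?thesis unfolding spec_map_def by (rule A.lsup_unique)
qed

lemma spec_comp:
  assumes L: "ideal_lattice L" and L': "ideal_lattice L'" and L'': "ideal_lattice L''"
    and h: "ilat_hom L' L \<psi>" and t: "ilat_hom L'' L' \<theta>" and p: "prime_el L p"
  shows "spec_map L'' L (\<psi> \<circ> \<theta>) p = spec_map L'' L' \<theta> (spec_map L' L \<psi> p)"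
proof -
  interpret A: IL L by (rule IL.intro[OF L])
  have pc: "p \<in> car L" using A.prime_in[OF p] .
  have "{a \<in> car L''. leq L ((\<psi> \<circ> \<theta>) a) p} = {a \<in> car L''. leq L' (\<theta> a) (spec_map L' L \<psi> p)}"
    using spec_char[OF L L' h pc] hom_in[OF t] by auto
  then show ?thesis unfolding spec_map_def by simp
qed

lemma Lopen_map_hom:
  assumes g: "continuous_map Y X g"
  shows "ilat_hom (Lopen X) (Lopen Y) (Lopen_map Y g)"
  unfolding ilat_hom_def
proof (intro conjI ballI allI impI)
  have gt: "\<And>y. y \<in> topspace Y \<Longrightarrow> g y \<in> topspace X" using g unfolding continuous_map_def by blast
  have go: "\<And>U. openin X U \<Longrightarrow> openin Y (Lopen_map Y g U)"
    using g unfolding continuous_map_def Lopen_map_def by blast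
  fix U assume "U \<in> car (Lopen X)"
  then show "Lopen_map Y g U \<in> car (Lopen Y)" using go by simp
next
  have go: "\<And>U. openin X U \<Longrightarrow> openin Y (Lopen_map Y g U)"
    using g unfolding continuous_map_def Lopen_map_def by blast
  fix B assume B: "B \<subseteq> car (Lopen X)"
  have e1: "lsup (Lopen X) B = \<Union>B" using B by (intro lsup_Lopen) auto
  have e2: "lsup (Lopen Y) (Lopen_map Y g ` B) = \<Union>(Lopen_map Y g ` B)"
    using B go by (intro lsup_Lopen) auto
  show "Lopen_map Y g (lsup (Lopen X) B) = lsup (Lopen Y) (Lopen_map Y g ` B)"
    unfolding e1 e2 Lopen_map_def by auto
next
  have gt: "\<And>y. y \<in> topspace Y \<Longrightarrow> g y \<in> topspace X" using g unfolding continuous_map_def by blast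
  show "Lopen_map Y g (ltop (Lopen X)) = ltop (Lopen Y)"
    unfolding ltop_Lopen Lopen_map_def using gt by auto
next
  fix U V
  show "Lopen_map Y g (mult (Lopen X) U V) = mult (Lopen Y) (Lopen_map Y g U) (Lopen_map Y g V)"
    unfolding Lopen_map_def by auto
qed

lemma Lopen_map_id: "openin X U \<Longrightarrow> Lopen_map X id U = U"
  unfolding Lopen_map_def using openin_subset by auto

lemma Lopen_map_comp:
  assumes h: "continuous_map Z Y h"
  shows "Lopen_map Z (g \<circ> h) U = Lopen_map Z h (Lopen_map Y g U)"
proof -
  have ht: "\<And>z. z \<in> topspace Z \<Longrightarrow> h z \<in> topspace Y" using h unfolding continuous_map_def by blast
  show ?thesis unfolding Lopen_map_def using ht by auto
qed

context IL
begin

lemma Phi_char: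
  assumes h: "ilat_hom L (Lopen X) \<phi>" and x: "x \<in> topspace X" and a: "a \<in> car L"
  shows "leq L a (adj_Phi L \<phi> x) \<longleftrightarrow> x \<notin> \<phi> a"
proof -
  define S where "S = {c. compact_el L c \<and> x \<notin> \<phi> c}"
  have Sc: "S \<subseteq> car L" unfolding S_def using compact_in by blast
  have q: "adj_Phi L \<phi> x = lsup L S" unfolding adj_Phi_def S_def by simp
  have qc: "lsup L S \<in> car L" using lsup_in[OF Sc] .
  have "\<phi> (lsup L S) = lsup (Lopen X) (\<phi> ` S)" using hom_sup[OF h Sc] .
  also have "\<dots> = \<Union>(\<phi> ` S)" using hom_in[OF h] Sc by (intro lsup_Lopen) auto
  finally have xq: "x \<notin> \<phi> (lsup L S)" unfolding S_def by auto
  show ?thesis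
  proof
    assume "leq L a (adj_Phi L \<phi> x)"
    then have "\<phi> a \<subseteq> \<phi> (lsup L S)" using hom_Lopen_mono[OF h IL a qc] q by simp
    then show "x \<notin> \<phi> a" using xq by blast
  next
    assume xa: "x \<notin> \<phi> a"
    define C where "C = {c. compact_el L c \<and> leq L c a}"
    have "C \<subseteq> S"
    proof
      fix c assume "c \<in> C"
      then have c: "compact_el L c" "leq L c a" unfolding C_def by auto
      then have "\<phi> c \<subseteq> \<phi> a" using hom_Lopen_mono[OF h IL compact_in[OF c(1)] a] by blast
      then show "c \<in> S" using c xa unfolding S_def by blast
    qed
    then have "leq L (lsup L C) (lsup L S)" using lsup_mono Sc by blast
    moreover have "a = lsup L C" unfolding C_def using sup_compacts[OF a] .
    ultimately show "leq L a (adj_Phi L \<phi> x)" using q by simp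
  qed
qed

lemma Phi_in: "adj_Phi L \<phi> x \<in> car L"
  unfolding adj_Phi_def by (rule lsup_in) (use compact_in in blast)

lemma Phi_prime:
  assumes h: "ilat_hom L (Lopen X) \<phi>" and x: "x \<in> topspace X"
  shows "prime_el L (adj_Phi L \<phi> x)"
  unfolding prime_el_def
proof (intro conjI ballI impI)
  let ?q = "adj_Phi L \<phi> x"
  show "?q \<in> car L" using Phi_in .
  show "?q \<noteq> ltop L"
  proof
    assume e: "?q = ltop L"
    have "leq L (ltop L) ?q" using e refl[OF top_in] by simp
    then have "x \<notin> \<phi> (ltop L)" using Phi_char[OF h x top_in] by blast
    then show False using hom_top[OF h] ltop_Lopen[of X] x by simp
  qed
  fix a b assume a: "a \<in> car L" and b: "b \<in> car L" and ab: "leq L (mult L a b) ?q"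
  have "x \<notin> \<phi> (mult L a b)" using Phi_char[OF h x mult_in[OF a b]] ab by blast
  then have "x \<notin> \<phi> a \<or> x \<notin> \<phi> b" using hom_mult[OF h a b] by simp
  then show "leq L a ?q \<or> leq L b ?q" using Phi_char[OF h x a] Phi_char[OF h x b] by blast
qed

lemma Phi_D:
  assumes h: "ilat_hom L (Lopen X) \<phi>" and x: "x \<in> topspace X" and a: "a \<in> car L"
  shows "adj_Phi L \<phi> x \<in> Dset L a \<longleftrightarrow> x \<in> \<phi> a"
  using Phi_char[OF h x a] Phi_prime[OF h x] unfolding Dset_def by simp

lemma Psi_Phi:
  assumes h: "ilat_hom L (Lopen X) \<phi>" and a: "a \<in> car L"
  shows "adj_Psi L X (adj_Phi L \<phi>) a = \<phi> a"
proof -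
  have "openin X (\<phi> a)" using hom_in[OF h a] by simp
  then have sub: "\<phi> a \<subseteq> topspace X" using openin_subset by blast
  show ?thesis unfolding adj_Psi_def using Phi_D[OF h _ a] sub by auto
qed

lemma Phi_cont:
  assumes h: "ilat_hom L (Lopen X) \<phi>"
  shows "continuous_map X (Spec L) (adj_Phi L \<phi>)"
  unfolding continuous_map_def
proof (intro conjI allI impI)
  show "adj_Phi L \<phi> \<in> topspace X \<rightarrow> topspace (Spec L)"
    unfolding topspace_Spec using Phi_prime[OF h] by blast
  fix U assume "openin (Spec L) U"
  then obtain a where a: "a \<in> car L" "U = Dset L a" using openin_Spec by blast
  have "{x \<in> topspace X. adj_Phi L \<phi> x \<in> U} = adj_Psi L X (adj_Phi L \<phi>) a"
    unfolding adj_Psi_def a(2) by simp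
  also have "\<dots> = \<phi> a" using Psi_Phi[OF h a(1)] .
  finally show "openin X {x \<in> topspace X. adj_Phi L \<phi> x \<in> U}" using hom_in[OF h a(1)] by simp
qed

lemma cont_prime:
  assumes f: "continuous_map X (Spec L) f" and x: "x \<in> topspace X"
  shows "prime_el L (f x)"
  using f x unfolding continuous_map_def topspace_Spec by blast

lemma Psi_open:
  assumes f: "continuous_map X (Spec L) f" and a: "a \<in> car L"
  shows "openin X (adj_Psi L X f a)"
  using f openin_D[OF a] unfolding continuous_map_def adj_Psi_def by blast

lemma Psi_hom:
  assumes f: "continuous_map X (Spec L) f"
  shows "ilat_hom L (Lopen X) (adj_Psi L X f)"
  unfolding ilat_hom_def
proof (intro conjI ballI allI impI)
  fix a assume "a \<in> car L"
  then show "adj_Psi L X f a \<in> car (Lopen X)" using Psi_open[OF f] by simp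
next
  fix B assume B: "B \<subseteq> car L"
  have e: "lsup (Lopen X) (adj_Psi L X f ` B) = \<Union>(adj_Psi L X f ` B)"
    using B Psi_open[OF f] by (intro lsup_Lopen) auto
  show "adj_Psi L X f (lsup L B) = lsup (Lopen X) (adj_Psi L X f ` B)"
    unfolding e adj_Psi_def D_sup[OF B] by auto
next
  have "adj_Psi L X f (ltop L) = topspace X"
    unfolding adj_Psi_def D_top using cont_prime[OF f] by auto
  then show "adj_Psi L X f (ltop L) = ltop (Lopen X)" using ltop_Lopen[of X] by simp
next
  fix a b assume a: "a \<in> car L" and b: "b \<in> car L"
  show "adj_Psi L X f (mult L a b) = mult (Lopen X) (adj_Psi L X f a) (adj_Psi L X f b)"
    unfolding adj_Psi_def D_mult[OF a b] by auto
qed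

lemma Phi_Psi:
  assumes f: "continuous_map X (Spec L) f" and x: "x \<in> topspace X"
  shows "adj_Phi L (adj_Psi L X f) x = f x"
proof -
  have fp: "prime_el L (f x)" using cont_prime[OF f x] .
  have "{c. compact_el L c \<and> x \<notin> adj_Psi L X f c} = {c. compact_el L c \<and> leq L c (f x)}"
    using x fp unfolding adj_Psi_def Dset_def by auto
  then have "adj_Phi L (adj_Psi L X f) x = lsup L {c. compact_el L c \<and> leq L c (f x)}"
    unfolding adj_Phi_def by simp
  also have "\<dots> = f x" using sup_compacts[OF prime_in[OF fp]] by simp
  finally show ?thesis .
qed

end

lemma nat1:
  assumes L: "ideal_lattice L" and L': "ideal_lattice L'" and h: "ilat_hom L' L \<psi>"
    and g: "continuous_map Y X g" and f: "continuous_map X (Spec L) f" and a: "a \<in> car L'"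
  shows "adj_Psi L' Y (spec_map L' L \<psi> \<circ> f \<circ> g) a = Lopen_map Y g (adj_Psi L X f (\<psi> a))"
proof -
  interpret A: IL L by (rule IL.intro[OF L])
  have gt: "\<And>y. y \<in> topspace Y \<Longrightarrow> g y \<in> topspace X" using g unfolding continuous_map_def by blast
  have "y \<in> adj_Psi L' Y (spec_map L' L \<psi> \<circ> f \<circ> g) a \<longleftrightarrow> y \<in> Lopen_map Y g (adj_Psi L X f (\<psi> a))" for y
  proof (cases "y \<in> topspace Y")
    case True
    then have fp: "prime_el L (f (g y))" using A.cont_prime[OF f gt] by blast
    show ?thesis using spec_D[OF L L' h fp a] True gt[OF True]
      unfolding adj_Psi_def Lopen_map_def by simp
  next
    case False then show ?thesis unfolding adj_Psi_def Lopen_map_def by simp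
  qed
  then show ?thesis by blast
qed

lemma nat2:
  assumes L: "ideal_lattice L" and L': "ideal_lattice L'" and h: "ilat_hom L' L \<psi>"
    and g: "continuous_map Y X g" and ph: "ilat_hom L (Lopen X) \<phi>" and y: "y \<in> topspace Y"
  shows "adj_Phi L' (Lopen_map Y g \<circ> \<phi> \<circ> \<psi>) y = spec_map L' L \<psi> (adj_Phi L \<phi> (g y))"
proof -
  interpret A: IL L by (rule IL.intro[OF L])
  interpret B: IL L' by (rule IL.intro[OF L'])
  have x: "g y \<in> topspace X" using g y unfolding continuous_map_def by blast
  define T where "T = {a \<in> car L'. g y \<notin> \<phi> (\<psi> a)}"
  define K where "K = {c. compact_el L' c \<and> g y \<notin> \<phi> (\<psi> c)}"
  have Tc: "T \<subseteq> car L'" unfolding T_def by blast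
  have KT: "K \<subseteq> T" unfolding K_def T_def using B.compact_in by blast
  have Kc: "K \<subseteq> car L'" using KT Tc by blast
  have e1: "adj_Phi L' (Lopen_map Y g \<circ> \<phi> \<circ> \<psi>) y = lsup L' K"
    unfolding adj_Phi_def K_def Lopen_map_def using y by simp
  have "{a \<in> car L'. leq L (\<psi> a) (adj_Phi L \<phi> (g y))} = T"
    unfolding T_def using A.Phi_char[OF ph x] hom_in[OF h] by auto
  then have e2: "spec_map L' L \<psi> (adj_Phi L \<phi> (g y)) = lsup L' T"
    unfolding spec_map_def by simp
  have l1: "leq L' (lsup L' K) (lsup L' T)" using B.lsup_mono[OF KT Tc] .
  have l2: "leq L' (lsup L' T) (lsup L' K)"
  proof (rule B.lsup_least[OF Tc B.lsup_in[OF Kc]])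
    fix t assume t: "t \<in> T"
    then have tc: "t \<in> car L'" using Tc by blast
    define C where "C = {c. compact_el L' c \<and> leq L' c t}"
    have "C \<subseteq> K"
    proof
      fix c assume "c \<in> C"
      then have c: "compact_el L' c" "leq L' c t" unfolding C_def by auto
      have cc: "c \<in> car L'" using B.compact_in[OF c(1)] .
      have "leq L (\<psi> c) (\<psi> t)" using hom_mono[OF L' L h cc tc c(2)] .
      then have "\<phi> (\<psi> c) \<subseteq> \<phi> (\<psi> t)" using hom_Lopen_mono[OF ph L hom_in[OF h cc] hom_in[OF h tc]] by blast
      then show "c \<in> K" using t c unfolding T_def K_def by blast
    qed
    then have "leq L' (lsup L' C) (lsup L' K)" using B.lsup_mono[OF _ Kc] by blast
    then show "leq L' t (lsup L' K)" using B.sup_compacts[OF tc] unfolding C_def by simp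
  qed
  show ?thesis unfolding e1 e2 using B.antisym[OF B.lsup_in[OF Kc] B.lsup_in[OF Tc] l1 l2] .
qed

lemma faithful:
  assumes X: "t0_space X" and g: "continuous_map Y X g" and h: "continuous_map Y X h"
    and eq: "\<forall>U. openin X U \<longrightarrow> Lopen_map Y g U = Lopen_map Y h U" and y: "y \<in> topspace Y"
  shows "g y = h y"
proof (rule ccontr)
  assume ne: "g y \<noteq> h y"
  have gy: "g y \<in> topspace X" using g y unfolding continuous_map_def by blast
  have hy: "h y \<in> topspace X" using h y unfolding continuous_map_def by blast
  obtain U where U: "openin X U" "g y \<notin> U \<longleftrightarrow> h y \<in> U"
    using X gy hy ne unfolding t0_space_def by blast
  have "Lopen_map Y g U = Lopen_map Y h U" using eq U(1) by blast
  then have "y \<in> Lopen_map Y g U \<longleftrightarrow> y \<in> Lopen_map Y h U" by simp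
  then have "g y \<in> U \<longleftrightarrow> h y \<in> U" using y unfolding Lopen_map_def by simp
  then show False using U(2) by blast
qed

lemma full:
  assumes X: "spectral_space X" and ph: "ilat_hom (Lopen X) (Lopen Y) \<phi>"
  shows "\<exists>g. continuous_map Y X g \<and> (\<forall>U. openin X U \<longrightarrow> \<phi> U = Lopen_map Y g U)"
proof -
  have sober: "\<And>Z. irreducible_closed X Z \<Longrightarrow> \<exists>x\<in>Z. X closure_of {x} = Z"
    using X unfolding spectral_space_def by blast
  define Ws where "Ws = (\<lambda>y. {U. openin X U \<and> y \<notin> \<phi> U})"
  define W where "W = (\<lambda>y. \<Union>(Ws y))"
  define Z where "Z = (\<lambda>y. topspace X - W y)"
  have Wo: "openin X (W y)" for y unfolding W_def Ws_def by (rule openin_Union) blast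
  have phW: "y \<notin> \<phi> (W y)" for y
  proof -
    have sub: "Ws y \<subseteq> car (Lopen X)" unfolding Ws_def by auto
    have "\<phi> (W y) = \<phi> (lsup (Lopen X) (Ws y))" unfolding W_def using sub by (subst lsup_Lopen) auto
    also have "\<dots> = lsup (Lopen Y) (\<phi> ` Ws y)" using hom_sup[OF ph sub] .
    also have "\<dots> = \<Union>(\<phi> ` Ws y)" using hom_in[OF ph] sub by (intro lsup_Lopen) auto
    finally show ?thesis unfolding Ws_def by auto
  qed
  have inW: "openin X U \<Longrightarrow> y \<notin> \<phi> U \<Longrightarrow> U \<subseteq> W y" for U y
    unfolding W_def Ws_def by blast
  have phU: "openin X U \<Longrightarrow> U \<subseteq> W y \<Longrightarrow> y \<notin> \<phi> U" for U y
    using hom_Lopen_Lopen_mono[OF ph _ Wo] phW by blast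
  have gen: "\<exists>x. x \<in> Z y \<and> X closure_of {x} = Z y" if y: "y \<in> topspace Y" for y
  proof -
    have "irreducible_closed X (Z y)"
      unfolding irreducible_closed_def
    proof (intro conjI allI impI)
      show "closedin X (Z y)" unfolding Z_def using closedin_diff[OF closedin_topspace Wo] .
      show "Z y \<noteq> {}"
      proof
        assume "Z y = {}"
        then have "topspace X \<subseteq> W y" unfolding Z_def by blast
        then have "y \<notin> \<phi> (topspace X)" using phU[OF openin_topspace] by blast
        moreover have "\<phi> (topspace X) = topspace Y" using hom_top[OF ph] ltop_Lopen[of X] ltop_Lopen[of Y] by simp
        ultimately show False using y by blast
      qed
      fix C1 C2 assume C: "closedin X C1 \<and> closedin X C2 \<and> Z y \<subseteq> C1 \<union> C2"
      define U1 where "U1 = topspace X - C1"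
      define U2 where "U2 = topspace X - C2"
      have U1: "openin X U1" unfolding U1_def using C unfolding closedin_def by blast
      have U2: "openin X U2" unfolding U2_def using C unfolding closedin_def by blast
      have "U1 \<inter> U2 \<subseteq> W y" unfolding U1_def U2_def using C unfolding Z_def by blast
      then have "y \<notin> \<phi> (U1 \<inter> U2)" using phU[OF openin_Int[OF U1 U2]] by blast
      then have "y \<notin> \<phi> U1 \<or> y \<notin> \<phi> U2" using hom_mult[OF ph, of U1 U2] U1 U2 by simp
      then have "U1 \<subseteq> W y \<or> U2 \<subseteq> W y" using inW U1 U2 by blast
      then show "Z y \<subseteq> C1 \<or> Z y \<subseteq> C2" unfolding Z_def U1_def U2_def by blast
    qed
    then show ?thesis using sober by blast
  qed
  define g where "g = (\<lambda>y. SOME x. x \<in> Z y \<and> X closure_of {x} = Z y)"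
  have gZ: "g y \<in> Z y" "X closure_of {g y} = Z y" if "y \<in> topspace Y" for y
    using someI_ex[OF gen[OF that]] unfolding g_def by blast+
  have key: "y \<in> \<phi> U \<longleftrightarrow> g y \<in> U" if y: "y \<in> topspace Y" and U: "openin X U" for y U
  proof
    assume "y \<in> \<phi> U"
    then have "\<not> U \<subseteq> W y" using phU[OF U] by blast
    then obtain z where z: "z \<in> U" "z \<notin> W y" by blast
    have "z \<in> topspace X" using openin_subset[OF U] z by blast
    then have "z \<in> X closure_of {g y}" using gZ[OF y] z unfolding Z_def by simp
    then show "g y \<in> U" using z U unfolding closure_of_def by blast
  next
    assume "g y \<in> U"
    moreover have "g y \<notin> W y" using gZ(1)[OF y] unfolding Z_def by blast
    ultimately have "\<not> U \<subseteq> W y" by blast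
    then show "y \<in> \<phi> U" using inW[OF U] by blast
  qed
  have eq: "\<phi> U = Lopen_map Y g U" if U: "openin X U" for U
  proof -
    have "openin Y (\<phi> U)" using hom_in[OF ph, of U] U by simp
    then have "\<phi> U \<subseteq> topspace Y" using openin_subset by blast
    then show ?thesis unfolding Lopen_map_def using key[OF _ U] by blast
  qed
  have "continuous_map Y X g"
    unfolding continuous_map_def
  proof (intro conjI allI impI)
    show "g \<in> topspace Y \<rightarrow> topspace X" using gZ(1) unfolding Z_def by blast
    fix U assume U: "openin X U"
    have "openin Y (\<phi> U)" using hom_in[OF ph, of U] U by simp
    then show "openin Y {x \<in> topspace Y. g x \<in> U}" using eq[OF U] unfolding Lopen_map_def by simp
  qed
  then show ?thesis using eq by blast
qed

lemma inv_hom: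
  assumes L: "ideal_lattice L" and h: "ilat_hom L L' \<phi>" and b: "bij_betw \<phi> (car L) (car L')"
  shows "ilat_hom L' L (inv_into (car L) \<phi>)"
proof -
  interpret A: IL L by (rule IL.intro[OF L])
  let ?\<psi> = "inv_into (car L) \<phi>"
  have inj: "inj_on \<phi> (car L)" using b bij_betw_imp_inj_on by blast
  have img: "\<phi> ` car L = car L'" using b bij_betw_imp_surj_on by blast
  have pin: "?\<psi> b' \<in> car L" if "b' \<in> car L'" for b' using inv_into_into[of b' \<phi> "car L"] that img by blast
  have fpf: "\<phi> (?\<psi> b') = b'" if "b' \<in> car L'" for b' using f_inv_into_f[of b' \<phi> "car L"] that img by blast
  have pfp: "?\<psi> (\<phi> a) = a" if "a \<in> car L" for a using inv_into_f_f[OF inj that] .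
  show ?thesis unfolding ilat_hom_def
  proof (intro conjI ballI allI impI)
    fix b' assume "b' \<in> car L'" then show "?\<psi> b' \<in> car L" using pin by blast
  next
    fix B' assume B': "B' \<subseteq> car L'"
    define B0 where "B0 = ?\<psi> ` B'"
    have B0: "B0 \<subseteq> car L" unfolding B0_def using pin B' by blast
    have "\<phi> ` B0 = B'" unfolding B0_def image_image using fpf B' by (simp add: subset_iff image_cong[OF refl, of B' "\<lambda>x. \<phi> (?\<psi> x)" id] )
    then have "\<phi> (lsup L B0) = lsup L' B'" using hom_sup[OF h B0] by simp
    then have "?\<psi> (lsup L' B') = lsup L B0" using pfp[OF A.lsup_in[OF B0]] by simp
    then show "?\<psi> (lsup L' B') = lsup L (?\<psi> ` B')" unfolding B0_def .
  next
    show "?\<psi> (ltop L') = ltop L" using pfp[OF A.top_in] hom_top[OF h] by simp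
  next
    fix a' b' assume a': "a' \<in> car L'" and b': "b' \<in> car L'"
    have "\<phi> (mult L (?\<psi> a') (?\<psi> b')) = mult L' a' b'"
      using hom_mult[OF h pin[OF a'] pin[OF b']] fpf[OF a'] fpf[OF b'] by simp
    then show "?\<psi> (mult L' a' b') = mult L (?\<psi> a') (?\<psi> b')"
      using pfp[OF A.mult_in[OF pin[OF a'] pin[OF b']]] by simp
  qed
qed

lemma semiprime_of_iso:
  assumes L: "ideal_lattice L" and Z: "spectral_space Z" and iso: "ilat_iso L (Lopen Z) \<phi>"
    and a: "a \<in> car L"
  shows "semiprime_el L a"
proof -
  interpret A: IL L by (rule IL.intro[OF L])
  have h: "ilat_hom L (Lopen Z) \<phi>" and b: "bij_betw \<phi> (car L) (car (Lopen Z))"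
    and hi: "ilat_hom (Lopen Z) L (inv_into (car L) \<phi>)" using iso unfolding ilat_iso_def by blast+
  have inj: "inj_on \<phi> (car L)" using b bij_betw_imp_inj_on by blast
  show ?thesis unfolding semiprime_el_def
  proof (intro conjI ballI impI)
    show "a \<in> car L" by fact
    fix c assume c: "c \<in> car L" and cc: "leq L (mult L c c) a"
    have "\<phi> (mult L c c) \<subseteq> \<phi> a" using hom_Lopen_mono[OF h L A.mult_in[OF c c] a cc] .
    then have sub: "\<phi> c \<subseteq> \<phi> a" using hom_mult[OF h c c] by simp
    have "leq L (inv_into (car L) \<phi> (\<phi> c)) (inv_into (car L) \<phi> (\<phi> a))"
      using hom_mono[OF IL_Lopen[OF Z] L hi _ _] hom_in[OF h c] hom_in[OF h a] sub by simp
    then show "leq L c a" using inv_into_f_f[OF inj c] inv_into_f_f[OF inj a] by simp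
  qed
qed

context IL
begin

lemma pw_semiprime:
  assumes sp: "semiprime_el L a" and c: "c \<in> car L"
  shows "leq L (lpw L c n) a \<Longrightarrow> leq L c a"
proof (induction n rule: less_induct)
  case (less n)
  show ?case
  proof (cases n)
    case 0 then show ?thesis using less.prems by simp
  next
    case (Suc k)
    define m where "m = n div 2"
    have mn: "m < n" unfolding m_def using Suc by simp
    have nm: "n \<le> m + m + 1" unfolding m_def by simp
    have ac: "a \<in> car L" using sp unfolding semiprime_el_def by blast
    have "leq L (lpw L c (m + m + 1)) (lpw L c n)" using pw_anti[OF c nm] .
    then have "leq L (lpw L c (m + m + 1)) a"
      using trans[OF _ less.prems pw_in[OF c] pw_in[OF c] ac] by blast
    then have "leq L (mult L (lpw L c m) (lpw L c m)) a" using pw_add[OF c] by simp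
    then have "leq L (lpw L c m) a" using sp pw_in[OF c] unfolding semiprime_el_def by blast
    then show ?thesis using less.IH[OF mn] by blast
  qed
qed

lemma D_le:
  assumes sp: "semiprime_el L a" and b: "b \<in> car L" and sub: "Dset L b \<subseteq> Dset L a"
  shows "leq L b a"
proof -
  have ac: "a \<in> car L" using sp unfolding semiprime_el_def by blast
  define C where "C = {c. compact_el L c \<and> leq L c b}"
  have Cc: "C \<subseteq> car L" unfolding C_def using compact_in by blast
  have "leq L (lsup L C) a"
  proof (rule lsup_least[OF Cc ac])
    fix c assume "c \<in> C"
    then have c: "compact_el L c" "leq L c b" unfolding C_def by auto
    have cc: "c \<in> car L" using compact_in[OF c(1)] .
    show "leq L c a"
    proof (rule ccontr)
      assume nca: "\<not> leq L c a"
      then have "\<forall>n. \<not> leq L (lpw L c n) a" using pw_semiprime[OF sp cc] by blast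
      then obtain p where p: "prime_el L p" "leq L a p" "\<not> leq L c p" using prime_exists[OF ac c(1)] by blast
      have "p \<in> Dset L c" using p unfolding Dset_def by blast
      then have "p \<in> Dset L a" using D_mono[OF cc b c(2)] sub by blast
      then show False using p unfolding Dset_def by blast
    qed
  qed
  then show ?thesis using sup_compacts[OF b] unfolding C_def by simp
qed

lemma iso_Spec:
  assumes sp: "\<forall>a\<in>car L. semiprime_el L a"
  shows "ilat_iso L (Lopen (Spec L)) (Dset L)"
proof -
  have h: "ilat_hom L (Lopen (Spec L)) (Dset L)"
    unfolding ilat_hom_def
  proof (intro conjI ballI allI impI)
    fix a assume "a \<in> car L" then show "Dset L a \<in> car (Lopen (Spec L))" using openin_D by simp
  next
    fix B assume B: "B \<subseteq> car L"
    have "lsup (Lopen (Spec L)) (Dset L ` B) = \<Union>(Dset L ` B)" using B openin_D by (intro lsup_Lopen) auto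
    then show "Dset L (lsup L B) = lsup (Lopen (Spec L)) (Dset L ` B)" using D_sup[OF B] by simp
  next
    show "Dset L (ltop L) = ltop (Lopen (Spec L))" using D_top topspace_Spec ltop_Lopen[of "Spec L"] by simp
  next
    fix a b assume "a \<in> car L" "b \<in> car L"
    then show "Dset L (mult L a b) = mult (Lopen (Spec L)) (Dset L a) (Dset L b)" using D_mult by simp
  qed
  have b: "bij_betw (Dset L) (car L) (car (Lopen (Spec L)))"
    unfolding bij_betw_def
  proof
    show "inj_on (Dset L) (car L)"
    proof (rule inj_onI)
      fix a b assume a: "a \<in> car L" and b: "b \<in> car L" and e: "Dset L a = Dset L b"
      have "leq L a b" using D_le[of b a] sp a b e by simp
      moreover have "leq L b a" using D_le[of a b] sp a b e by simp
      ultimately show "a = b" using antisym a b by blast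
    qed
    show "Dset L ` car L = car (Lopen (Spec L))" using openin_Spec by auto
  qed
  show ?thesis unfolding ilat_iso_def using h b inv_hom[OF IL h b] by blast
qed

end

theorem mainTheorem8:
  fixes L :: "'a ilat" and X :: "'b topology"
  assumes L: "ideal_lattice L" and X: "spectral_space X"
  shows
    \<comment> \<open>the functors are well defined on objects\<close>
    "spectral_space (Spec L) \<and> ideal_lattice (Lopen X) \<and>
     \<comment> \<open>Spec on morphisms\<close>
     (\<forall>(L' :: 'c ilat) \<psi>. ideal_lattice L' \<and> ilat_hom L' L \<psi> \<longrightarrow>
        continuous_map (Spec L) (Spec L') (spec_map L' L \<psi>)) \<and>
     (\<forall>p\<in>topspace (Spec L). spec_map L L id p = p) \<and>
     (\<forall>(L' :: 'c ilat) (L'' :: 'e ilat) \<psi> \<theta>.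
        ideal_lattice L' \<and> ideal_lattice L'' \<and> ilat_hom L' L \<psi> \<and> ilat_hom L'' L' \<theta> \<longrightarrow>
        (\<forall>p\<in>topspace (Spec L). spec_map L'' L (\<psi> \<circ> \<theta>) p = spec_map L'' L' \<theta> (spec_map L' L \<psi> p))) \<and>
     \<comment> \<open>L_open on morphisms\<close>
     (\<forall>(Y :: 'd topology) g. spectral_space Y \<and> continuous_map Y X g \<longrightarrow>
        ilat_hom (Lopen X) (Lopen Y) (Lopen_map Y g)) \<and>
     (\<forall>U. openin X U \<longrightarrow> Lopen_map X id U = U) \<and>
     (\<forall>(Y :: 'd topology) (Z :: 'f topology) g h.
        spectral_space Y \<and> spectral_space Z \<and> continuous_map Y X g \<and> continuous_map Z Y h \<longrightarrow>
        (\<forall>U. openin X U \<longrightarrow> Lopen_map Z (g \<circ> h) U = Lopen_map Z h (Lopen_map Y g U))) \<and>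
     \<comment> \<open>the two assignments are well defined and mutually inverse\<close>
     (\<forall>\<phi>. ilat_hom L (Lopen X) \<phi> \<longrightarrow>
        continuous_map X (Spec L) (adj_Phi L \<phi>) \<and>
        (\<forall>a\<in>car L. adj_Psi L X (adj_Phi L \<phi>) a = \<phi> a)) \<and>
     (\<forall>f. continuous_map X (Spec L) f \<longrightarrow>
        ilat_hom L (Lopen X) (adj_Psi L X f) \<and>
        (\<forall>x\<in>topspace X. adj_Phi L (adj_Psi L X f) x = f x)) \<and>
     \<comment> \<open>naturality in L and in X\<close>
     (\<forall>(L' :: 'c ilat) \<psi> (Y :: 'd topology) g.
        ideal_lattice L' \<and> ilat_hom L' L \<psi> \<and> spectral_space Y \<and> continuous_map Y X g \<longrightarrow>
        (\<forall>f. continuous_map X (Spec L) f \<longrightarrow>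
           (\<forall>a\<in>car L'. adj_Psi L' Y (spec_map L' L \<psi> \<circ> f \<circ> g) a
                         = Lopen_map Y g (adj_Psi L X f (\<psi> a)))) \<and>
        (\<forall>\<phi>. ilat_hom L (Lopen X) \<phi> \<longrightarrow>
           (\<forall>y\<in>topspace Y. adj_Phi L' (Lopen_map Y g \<circ> \<phi> \<circ> \<psi>) y
                         = spec_map L' L \<psi> (adj_Phi L \<phi> (g y))))) \<and>
     \<comment> \<open>L_open is fully faithful\<close>
     (\<forall>(Y :: 'd topology). spectral_space Y \<longrightarrow>
        (\<forall>g h. continuous_map Y X g \<and> continuous_map Y X h \<and>
              (\<forall>U. openin X U \<longrightarrow> Lopen_map Y g U = Lopen_map Y h U) \<longrightarrow>
              (\<forall>y\<in>topspace Y. g y = h y)) \<and>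
        (\<forall>\<phi>. ilat_hom (Lopen X) (Lopen Y) \<phi> \<longrightarrow>
              (\<exists>g. continuous_map Y X g \<and> (\<forall>U. openin X U \<longrightarrow> \<phi> U = Lopen_map Y g U)))) \<and>
     \<comment> \<open>essential image of L_open\<close>
     (\<forall>(Z :: 'd topology) \<phi>. spectral_space Z \<and> ilat_iso L (Lopen Z) \<phi> \<longrightarrow>
        (\<forall>a\<in>car L. semiprime_el L a)) \<and>
     ((\<forall>a\<in>car L. semiprime_el L a) \<longrightarrow>
        (\<exists>(Z :: 'a topology) \<phi>. spectral_space Z \<and> ilat_iso L (Lopen Z) \<phi>))"
proof -
  interpret A: IL L by (rule IL.intro[OF L])
  have tX: "t0_space X" using X unfolding spectral_space_def by blast
  show ?thesis
  proof (intro conjI)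
    show "spectral_space (Spec L)" by (rule A.spectral_Spec)
    show "ideal_lattice (Lopen X)" by (rule IL_Lopen[OF X])
    show "\<forall>(L' :: 'c ilat) \<psi>. ideal_lattice L' \<and> ilat_hom L' L \<psi> \<longrightarrow>
        continuous_map (Spec L) (Spec L') (spec_map L' L \<psi>)"
    proof (intro allI impI)
      fix L' :: "'c ilat" and \<psi> assume "ideal_lattice L' \<and> ilat_hom L' L \<psi>"
      then show "continuous_map (Spec L) (Spec L') (spec_map L' L \<psi>)" using spec_cont[OF L] by blast
    qed
    show "\<forall>p\<in>topspace (Spec L). spec_map L L id p = p"
      using spec_id[OF L] A.topspace_Spec by simp
    show "\<forall>(L' :: 'c ilat) (L'' :: 'e ilat) \<psi> \<theta>.
        ideal_lattice L' \<and> ideal_lattice L'' \<and> ilat_hom L' L \<psi> \<and> ilat_hom L'' L' \<theta> \<longrightarrow>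
        (\<forall>p\<in>topspace (Spec L). spec_map L'' L (\<psi> \<circ> \<theta>) p = spec_map L'' L' \<theta> (spec_map L' L \<psi> p))"
    proof (intro allI impI ballI)
      fix L' :: "'c ilat" and L'' :: "'e ilat" and \<psi> \<theta> p
      assume H: "ideal_lattice L' \<and> ideal_lattice L'' \<and> ilat_hom L' L \<psi> \<and> ilat_hom L'' L' \<theta>"
        and p: "p \<in> topspace (Spec L)"
      have pp: "prime_el L p" using p A.topspace_Spec by simp
      show "spec_map L'' L (\<psi> \<circ> \<theta>) p = spec_map L'' L' \<theta> (spec_map L' L \<psi> p)"
        using spec_comp[OF L _ _ _ _ pp] H by blast
    qed
    show "\<forall>(Y :: 'd topology) g. spectral_space Y \<and> continuous_map Y X g \<longrightarrow>
        ilat_hom (Lopen X) (Lopen Y) (Lopen_map Y g)"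
    proof (intro allI impI)
      fix Y :: "'d topology" and g
      assume "spectral_space Y \<and> continuous_map Y X g"
      then have "continuous_map Y X g" by blast
      then show "ilat_hom (Lopen X) (Lopen Y) (Lopen_map Y g)" by (rule Lopen_map_hom)
    qed
    show "\<forall>U. openin X U \<longrightarrow> Lopen_map X id U = U"
      using Lopen_map_id by blast
    show "\<forall>(Y :: 'd topology) (Z :: 'f topology) g h.
        spectral_space Y \<and> spectral_space Z \<and> continuous_map Y X g \<and> continuous_map Z Y h \<longrightarrow>
        (\<forall>U. openin X U \<longrightarrow> Lopen_map Z (g \<circ> h) U = Lopen_map Z h (Lopen_map Y g U))"
    proof (intro allI impI)
      fix Y :: "'d topology" and Z :: "'f topology" and g h U
      assume "spectral_space Y \<and> spectral_space Z \<and> continuous_map Y X g \<and> continuous_map Z Y h"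
      then have "continuous_map Z Y h" by blast
      then show "Lopen_map Z (g \<circ> h) U = Lopen_map Z h (Lopen_map Y g U)" by (rule Lopen_map_comp)
    qed
    show "\<forall>\<phi>. ilat_hom L (Lopen X) \<phi> \<longrightarrow>
        continuous_map X (Spec L) (adj_Phi L \<phi>) \<and>
        (\<forall>a\<in>car L. adj_Psi L X (adj_Phi L \<phi>) a = \<phi> a)"
    proof (intro allI impI conjI ballI)
      fix \<phi> assume h: "ilat_hom L (Lopen X) \<phi>"
      show "continuous_map X (Spec L) (adj_Phi L \<phi>)" using A.Phi_cont[OF h] .
      fix a assume "a \<in> car L"
      then show "adj_Psi L X (adj_Phi L \<phi>) a = \<phi> a" using A.Psi_Phi[OF h] by blast
    qed
    show "\<forall>f. continuous_map X (Spec L) f \<longrightarrow>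
        ilat_hom L (Lopen X) (adj_Psi L X f) \<and>
        (\<forall>x\<in>topspace X. adj_Phi L (adj_Psi L X f) x = f x)"
    proof (intro allI impI conjI ballI)
      fix f assume f: "continuous_map X (Spec L) f"
      show "ilat_hom L (Lopen X) (adj_Psi L X f)" using A.Psi_hom[OF f] .
      fix x assume "x \<in> topspace X"
      then show "adj_Phi L (adj_Psi L X f) x = f x" using A.Phi_Psi[OF f] by blast
    qed
    show "\<forall>(L' :: 'c ilat) \<psi> (Y :: 'd topology) g.
        ideal_lattice L' \<and> ilat_hom L' L \<psi> \<and> spectral_space Y \<and> continuous_map Y X g \<longrightarrow>
        (\<forall>f. continuous_map X (Spec L) f \<longrightarrow>
           (\<forall>a\<in>car L'. adj_Psi L' Y (spec_map L' L \<psi> \<circ> f \<circ> g) a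
                         = Lopen_map Y g (adj_Psi L X f (\<psi> a)))) \<and>
        (\<forall>\<phi>. ilat_hom L (Lopen X) \<phi> \<longrightarrow>
           (\<forall>y\<in>topspace Y. adj_Phi L' (Lopen_map Y g \<circ> \<phi> \<circ> \<psi>) y
                         = spec_map L' L \<psi> (adj_Phi L \<phi> (g y))))"
    proof (intro allI impI conjI ballI)
      fix L' :: "'c ilat" and \<psi> and Y :: "'d topology" and g
      assume H: "ideal_lattice L' \<and> ilat_hom L' L \<psi> \<and> spectral_space Y \<and> continuous_map Y X g"
      have L': "ideal_lattice L'" and h: "ilat_hom L' L \<psi>" and g: "continuous_map Y X g" using H by auto
      {
        fix f a assume f: "continuous_map X (Spec L) f" and a: "a \<in> car L'"
        show "adj_Psi L' Y (spec_map L' L \<psi> \<circ> f \<circ> g) a = Lopen_map Y g (adj_Psi L X f (\<psi> a))"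
          by (rule nat1[OF L L' h g f a])
      }
      fix \<phi> y assume ph: "ilat_hom L (Lopen X) \<phi>" and y: "y \<in> topspace Y"
      show "adj_Phi L' (Lopen_map Y g \<circ> \<phi> \<circ> \<psi>) y = spec_map L' L \<psi> (adj_Phi L \<phi> (g y))"
        by (rule nat2[OF L L' h g ph y])
    qed
    show "\<forall>(Y :: 'd topology). spectral_space Y \<longrightarrow>
        (\<forall>g h. continuous_map Y X g \<and> continuous_map Y X h \<and>
              (\<forall>U. openin X U \<longrightarrow> Lopen_map Y g U = Lopen_map Y h U) \<longrightarrow>
              (\<forall>y\<in>topspace Y. g y = h y)) \<and>
        (\<forall>\<phi>. ilat_hom (Lopen X) (Lopen Y) \<phi> \<longrightarrow>
              (\<exists>g. continuous_map Y X g \<and> (\<forall>U. openin X U \<longrightarrow> \<phi> U = Lopen_map Y g U)))"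
    proof (intro allI impI conjI ballI)
      fix Y :: "'d topology" and g h y
      assume H: "continuous_map Y X g \<and> continuous_map Y X h \<and> (\<forall>U. openin X U \<longrightarrow> Lopen_map Y g U = Lopen_map Y h U)"
        and y: "y \<in> topspace Y"
      show "g y = h y" using faithful[OF tX _ _ _ y] H by blast
    next
      fix Y :: "'d topology" and \<phi> assume "ilat_hom (Lopen X) (Lopen Y) \<phi>"
      then show "\<exists>g. continuous_map Y X g \<and> (\<forall>U. openin X U \<longrightarrow> \<phi> U = Lopen_map Y g U)"
        by (rule full[OF X])
    qed
    show "\<forall>(Z :: 'd topology) \<phi>. spectral_space Z \<and> ilat_iso L (Lopen Z) \<phi> \<longrightarrow>
        (\<forall>a\<in>car L. semiprime_el L a)"
    proof (intro allI impI ballI)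
      fix Z :: "'d topology" and \<phi> a
      assume H: "spectral_space Z \<and> ilat_iso L (Lopen Z) \<phi>" and a: "a \<in> car L"
      show "semiprime_el L a" using semiprime_of_iso[OF L _ _ a] H by blast
    qed
    show "(\<forall>a\<in>car L. semiprime_el L a) \<longrightarrow>
        (\<exists>(Z :: 'a topology) \<phi>. spectral_space Z \<and> ilat_iso L (Lopen Z) \<phi>)"
    proof
      assume "\<forall>a\<in>car L. semiprime_el L a"
      then have "ilat_iso L (Lopen (Spec L)) (Dset L)" by (rule A.iso_Spec)
      then show "\<exists>(Z :: 'a topology) \<phi>. spectral_space Z \<and> ilat_iso L (Lopen Z) \<phi>"
        using A.spectral_Spec by blast
    qed
  qed
qed

end
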